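(* Let $\mathcal{E}$ be the 2D Laplace equation $u_{xx}+u_{yy}=0$, with cotangent equation $\{u_{xx}+u_{yy}=0,\ p_{xx}+p_{yy}=0\}$, and consider the variational bivectors $B_0=p$, $B_1=p_{yy}$, $B_2=p_{xy}$, $B_3=p_y+2(xp_{xy}+yp_{yy})$, $B_4=p_x+2(yp_{xy}-xp_{yy})$, $B_5=u_{yy}p_y-u_{xy}p_x+2(u_yp_{yy}-u_xp_{xy})$, $B_6=u_{yy}p_x+u_{xy}p_y+2(u_yp_{xy}+u_xp_{yy})$, $B_7=(u_y+xu_{xy}+yu_{yy})p_x+(u_x+yu_{xy}-xu_{yy})p_y+2(yu_x-xu_y)p_{yy}+2(xu_x+yu_y)p_{xy}$, $B_8=-(u_x+yu_{xy}-xu_{yy})p_x+(u_y+xu_{xy}+yu_{yy})p_y+2(xu_x+yu_y)p_{yy}-2(yu_x-xu_y)p_{xy}$. Then $B_0,\dots,B_4$ are Poisson structures on $\mathcal{E}$, while $B_5,\dots,B_8$ are not Poisson structures; moreover, the Schouten brackets $[\![B_i,B_j]\!]$ are nonzero for all $5\le i\le j\le 8$.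
   Context: Setting: a scalar PDE $\mathcal{E}=\{F=0\}$ for one unknown $u(x^1,\dots,x^n)$, regarded as a submanifold of the infinite jet space with coordinates $x^i$, $u_\sigma$ ($\sigma$ a multi-index). $D_i$ are total derivatives, $D_\sigma$ their compositions. A $\mathcal{C}$-differential operator is an operator of the form $\sum_\sigma a^\sigma D_\sigma$ with smooth coefficients on the jet space (or on $\mathcal{E}$). The linearization is $\ell_F=\sum_\sigma \frac{\partial F}{\partial u_\sigma}D_\sigma$ and $\ell_{\mathcal{E}}$ its restriction to $\mathcal{E}$; $\Delta^*$ denotes the formal adjoint ($(\sum a^\sigma D_\sigma)^*=\sum(-1)^{|\sigma|}D_\sigma\circ a^\sigma$). The cotangent equation $\mathcal{T}^*\mathcal{E}$ is the system $\{F=0,\ \ell_F(p)=0\}$ (with all differential consequences), where $p$ is a new unknown of odd parity, so that all $p_\sigma$ are odd (anticommuting; in particular $p_\sigma p_\sigma=0$). Variational bivector: a $\mathcal{C}$-differential operator $H=\sum_\sigma h^\sigma D_\sigma$ on $\mathcal{E}$ such that (i) $\ell_{\mathcal{E}}(H_u)=0$ on $\mathcal{T}^*\mathcal{E}$, where $H_u=H(p)=\sum_\sigma h^\sigma p_\sigma$; and (ii) $H^*\circ\ell_{\mathcal{E}}^*=\ell_{\mathcal{E}}\circ H$ as operators on $\mathcal{E}$. Bivectors are identified with their functions $H_u$ (so "$B=\sum B_\sigma p_\sigma$" means $B=\sum B_\sigma D_\sigma$). Schouten bracket: for a bivector $H$, choose a bi-differential operator $\nabla$ in total derivatives on the jet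 space of $(u,p)$ with $\ell_F(H(p))-H^*(\ell_F(p))=\nabla(F,p)$ identically, and set $H_p=-\tfrac12\nabla^{*_1}(p,p)\big|_{\mathcal{T}^*\mathcal{E}}$ (even element quadratic in the $p_\sigma$; $\nabla^{*_1}$ is the adjoint in the first argument). Let $\mathrm{Ev}_{\phi(H)}=\sum_\sigma D_\sigma(H_u)\partial/\partial u_\sigma+D_\sigma(H_p)\partial/\partial p_\sigma$ (odd evolutionary derivation on $\mathcal{T}^*\mathcal{E}$). The Schouten bracket of bivectors $H,H'$ is $[\![H,H']\!]=\mathrm{Ev}_{\phi(H)}(H'_u)+\mathrm{Ev}_{\phi(H')}(H_u)$, a function on $\mathcal{T}^*\mathcal{E}$. $H$ is a Poisson structure if $[\![H,H]\!]=0$; two Poisson structures $H,H'$ are compatible if $[\![H,H']\!]=0$. *)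

theory Defs
  imports "HOL-Analysis.Analysis"
begin

text \<open>Coordinates: x, y and u_(i,j) = D_x^i D_y^j u.  A multi-index is a pair (i,j).\<close>
datatype jvar = JX | JY | JU "nat \<times> nat"

type_synonym jpt  = "jvar \<Rightarrow> real"
type_synonym jfun = "jpt \<Rightarrow> real"

text \<open>Elements linear in the odd variables p_sigma: a coefficient for each p_sigma
  (i.e. the function sum_sigma L sigma * p_sigma; also a C-differential operator
  sum_sigma L sigma * D_sigma).\<close>
type_synonym lin  = "nat \<times> nat \<Rightarrow> jfun"
text \<open>Elements quadratic in the odd variables: q rho kappa is the coefficient of the
  (ordered) product p_rho p_kappa.\<close>
type_synonym quad = "nat \<times> nat \<Rightarrow> nat \<times> nat \<Rightarrow> jfun"

definition pd :: "jvar \<Rightarrow> jfun \<Rightarrow> jfun" where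
  "pd v f = (\<lambda>pt. deriv (\<lambda>t. f (pt(v := t))) (pt v))"

fun pds :: "jvar list \<Rightarrow> jfun \<Rightarrow> jfun" where
  "pds [] f = f"
| "pds (v # vs) f = pd v (pds vs f)"

definition smooth_jet :: "jfun \<Rightarrow> bool" where
  "smooth_jet f \<longleftrightarrow>
     (\<exists>S. finite S \<and> (\<forall>pt pt'. (\<forall>v\<in>S. pt v = pt' v) \<longrightarrow> f pt = f pt')) \<and>
     (\<forall>vs. continuous_on UNIV (pds vs f) \<and>
            (\<forall>v pt. (\<lambda>t. pds vs f (pt(v := t))) differentiable (at (pt v))))"

definition DX :: "jfun \<Rightarrow> jfun" where
  "DX f = (\<lambda>pt. pd JX f pt +
      sum (\<lambda>s. pt (JU (fst s + 1, snd s)) * pd (JU s) f pt) {s. pd (JU s) f \<noteq> (\<lambda>_. 0)})"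

definition DY :: "jfun \<Rightarrow> jfun" where
  "DY f = (\<lambda>pt. pd JY f pt +
      sum (\<lambda>s. pt (JU (fst s, snd s + 1)) * pd (JU s) f pt) {s. pd (JU s) f \<noteq> (\<lambda>_. 0)})"

definition Dm :: "nat \<times> nat \<Rightarrow> jfun \<Rightarrow> jfun" where
  "Dm s f = (DX ^^ fst s) ((DY ^^ snd s) f)"

text \<open>Total derivatives on p-linear elements: D(f p_s) = D(f) p_s + f p_(s+1).\<close>
definition LDX :: "lin \<Rightarrow> lin" where
  "LDX L = (\<lambda>s pt. DX (L s) pt + (if fst s > 0 then L (fst s - 1, snd s) pt else 0))"

definition LDY :: "lin \<Rightarrow> lin" where
  "LDY L = (\<lambda>s pt. DY (L s) pt + (if snd s > 0 then L (fst s, snd s - 1) pt else 0))"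

definition LD :: "nat \<times> nat \<Rightarrow> lin \<Rightarrow> lin" where
  "LD s L = (LDX ^^ fst s) ((LDY ^^ snd s) L)"

text \<open>Total derivatives on p-quadratic elements (Leibniz rule; the derivations are even).\<close>
definition QDX :: "quad \<Rightarrow> quad" where
  "QDX q = (\<lambda>r k pt. DX (q r k) pt
      + (if fst r > 0 then q (fst r - 1, snd r) k pt else 0)
      + (if fst k > 0 then q r (fst k - 1, snd k) pt else 0))"

definition QDY :: "quad \<Rightarrow> quad" where
  "QDY q = (\<lambda>r k pt. DY (q r k) pt
      + (if snd r > 0 then q (fst r, snd r - 1) k pt else 0)
      + (if snd k > 0 then q r (fst k, snd k - 1) pt else 0))"

definition QD :: "nat \<times> nat \<Rightarrow> quad \<Rightarrow> quad" where
  "QD s q = (QDX ^^ fst s) ((QDY ^^ snd s) q)"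

definition Flap :: jfun where
  "Flap = (\<lambda>pt. pt (JU (2,0)) + pt (JU (0,2)))"

text \<open>Linearization ell_F = D_x^2 + D_y^2 (F is linear), applied to p-linear elements.\<close>
definition lapL :: "lin \<Rightarrow> lin" where
  "lapL L = (\<lambda>s pt. LDX (LDX L) s pt + LDY (LDY L) s pt)"

definition pL :: lin where
  "pL = (\<lambda>s pt. if s = (0,0) then 1 else 0)"

text \<open>Points of the infinitely prolonged equation E: all D_sigma F = 0.\<close>
definition onE :: "jpt \<Rightarrow> bool" where
  "onE pt \<longleftrightarrow> (\<forall>i j. pt (JU (i, j + 2)) + pt (JU (i + 2, j)) = 0)"

definition zeroE :: "jfun \<Rightarrow> bool" where
  "zeroE f \<longleftrightarrow> (\<forall>pt. onE pt \<longrightarrow> f pt = 0)"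

text \<open>Restriction to T*E of the odd part: on T*E, p_(i,j+2) = - p_(i+2,j), so
  p_(a-2k, b+2k) = (-1)^k p_(a,b) with internal coordinates p_(a,b), b <= 1.
  Lred gives the coefficient of the internal coordinate p_(a,b).\<close>
definition Lred :: "lin \<Rightarrow> nat \<times> nat \<Rightarrow> jfun" where
  "Lred L ab = (\<lambda>pt. \<Sum>k\<le>fst ab div 2.
      (-1) ^ k * L (fst ab - 2*k, snd ab + 2*k) pt)"

definition Qred :: "quad \<Rightarrow> nat \<times> nat \<Rightarrow> nat \<times> nat \<Rightarrow> jfun" where
  "Qred q ab cd = (\<lambda>pt. \<Sum>k\<le>fst ab div 2. \<Sum>l\<le>fst cd div 2.
      (-1) ^ (k + l) * q (fst ab - 2*k, snd ab + 2*k) (fst cd - 2*l, snd cd + 2*l) pt)"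

definition zeroT_L :: "lin \<Rightarrow> bool" where
  "zeroT_L L \<longleftrightarrow> (\<forall>ab. snd ab \<le> 1 \<longrightarrow> zeroE (Lred L ab))"

text \<open>A p-quadratic function vanishes on T*E (p's anticommute, so only the
  antisymmetrized internal coefficients matter).\<close>
definition zeroT_Q :: "quad \<Rightarrow> bool" where
  "zeroT_Q q \<longleftrightarrow> (\<forall>ab cd. snd ab \<le> 1 \<longrightarrow> snd cd \<le> 1 \<longrightarrow>
       zeroE (\<lambda>pt. Qred q ab cd pt - Qred q cd ab pt))"

definition adjL :: "lin \<Rightarrow> lin \<Rightarrow> lin" where
  "adjL H phi = (\<lambda>r pt. \<Sum>s\<in>{s. H s \<noteq> (\<lambda>_. 0)}.
      (-1) ^ (fst s + snd s) * LD s (\<lambda>k pt'. H s pt' * phi k pt') r pt)"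

definition var_bivector :: "lin \<Rightarrow> bool" where
  "var_bivector H \<longleftrightarrow> finite {s. H s \<noteq> (\<lambda>_. 0)} \<and> (\<forall>s. smooth_jet (H s)) \<and>
     zeroT_L (lapL H) \<and>
     (\<forall>k. zeroE (\<lambda>pt. adjL H (lapL pL) k pt - lapL H k pt))"

text \<open>A bi-differential operator nabla(a,b) = sum c s t D_s(a) D_t(b) (coefficients
  smooth functions of (x,y,u), finitely many nonzero) is admissible for H if
  ell_F(H(p)) - H*(ell_F(p)) = nabla(F,p) identically on the jet space.\<close>
definition admissible :: "lin \<Rightarrow> (nat \<times> nat \<Rightarrow> nat \<times> nat \<Rightarrow> jfun) \<Rightarrow> bool" where
  "admissible H c \<longleftrightarrow> finite {(s,t). c s t \<noteq> (\<lambda>_. 0)} \<and> (\<forall>s t. smooth_jet (c s t)) \<and>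
     (\<forall>k pt. lapL H k pt - adjL H (lapL pL) k pt =
             (\<Sum>s\<in>{s. c s k \<noteq> (\<lambda>_. 0)}. c s k pt * Dm s Flap pt))"

text \<open>H_p = -1/2 nabla^{*1}(p,p), with
  nabla^{*1}(q,b) = sum_s (-1)^|s| D_s(q * sum_t c s t D_t b).\<close>
definition Hp :: "(nat \<times> nat \<Rightarrow> nat \<times> nat \<Rightarrow> jfun) \<Rightarrow> quad" where
  "Hp c = (\<lambda>r k pt. - (1/2) * (\<Sum>s\<in>{s. \<exists>t. c s t \<noteq> (\<lambda>_. 0)}.
      (-1) ^ (fst s + snd s) *
      QD s (\<lambda>r' k' pt'. if r' = (0,0) then c s k' pt' else 0) r k pt))"

text \<open>Ev_phi(H) (H'_u) with Ev_phi(H) = sum D_s(H_u) d/du_s + D_s(H_p) d/dp_s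
  (odd derivation, coefficients on the left, left derivatives), H'_u = sum h'^t p_t.\<close>
definition evq :: "lin \<Rightarrow> (nat \<times> nat \<Rightarrow> nat \<times> nat \<Rightarrow> jfun) \<Rightarrow> lin \<Rightarrow> quad" where
  "evq H c H' = (\<lambda>r k pt.
      (\<Sum>s\<in>{s. H' s \<noteq> (\<lambda>_. 0)}. H' s pt * QD s (Hp c) r k pt) +
      (\<Sum>s\<in>{s. pd (JU s) (H' k) \<noteq> (\<lambda>_. 0)}. LD s H r pt * pd (JU s) (H' k) pt))"

definition schouten :: "lin \<Rightarrow> (nat \<times> nat \<Rightarrow> nat \<times> nat \<Rightarrow> jfun) \<Rightarrow>
                        lin \<Rightarrow> (nat \<times> nat \<Rightarrow> nat \<times> nat \<Rightarrow> jfun) \<Rightarrow> quad" where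
  "schouten H c H' c' = (\<lambda>r k pt. evq H c H' r k pt + evq H' c' H r k pt)"

definition schouten_zero :: "lin \<Rightarrow> lin \<Rightarrow> bool" where
  "schouten_zero H H' \<longleftrightarrow> (\<exists>c. admissible H c) \<and> (\<exists>c'. admissible H' c') \<and>
     (\<forall>c c'. admissible H c \<longrightarrow> admissible H' c' \<longrightarrow> zeroT_Q (schouten H c H' c'))"

definition schouten_nonzero :: "lin \<Rightarrow> lin \<Rightarrow> bool" where
  "schouten_nonzero H H' \<longleftrightarrow> (\<exists>c. admissible H c) \<and> (\<exists>c'. admissible H' c') \<and>
     (\<forall>c c'. admissible H c \<longrightarrow> admissible H' c' \<longrightarrow> \<not> zeroT_Q (schouten H c H' c'))"

definition poisson :: "lin \<Rightarrow> bool" where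
  "poisson H \<longleftrightarrow> var_bivector H \<and> schouten_zero H H"

definition mkL :: "((nat \<times> nat) \<times> jfun) list \<Rightarrow> lin" where
  "mkL xs = (\<lambda>s pt. \<Sum>(t,f)\<leftarrow>xs. if t = s then f pt else 0)"

abbreviation (input) cx :: jfun where "cx \<equiv> (\<lambda>pt. pt JX)"
abbreviation (input) cy :: jfun where "cy \<equiv> (\<lambda>pt. pt JY)"
abbreviation (input) cu :: "nat \<Rightarrow> nat \<Rightarrow> jfun" where "cu i j \<equiv> (\<lambda>pt. pt (JU (i,j)))"

definition B0 :: lin where "B0 = mkL [((0,0), \<lambda>pt. 1)]"
definition B1 :: lin where "B1 = mkL [((0,2), \<lambda>pt. 1)]"
definition B2 :: lin where "B2 = mkL [((1,1), \<lambda>pt. 1)]"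
definition B3 :: lin where
  "B3 = mkL [((0,1), \<lambda>pt. 1), ((1,1), \<lambda>pt. 2 * pt JX), ((0,2), \<lambda>pt. 2 * pt JY)]"
definition B4 :: lin where
  "B4 = mkL [((1,0), \<lambda>pt. 1), ((1,1), \<lambda>pt. 2 * pt JY), ((0,2), \<lambda>pt. - 2 * pt JX)]"
definition B5 :: lin where
  "B5 = mkL [((0,1), cu 0 2), ((1,0), \<lambda>pt. - cu 1 1 pt),
             ((0,2), \<lambda>pt. 2 * cu 0 1 pt), ((1,1), \<lambda>pt. - 2 * cu 1 0 pt)]"
definition B6 :: lin where
  "B6 = mkL [((1,0), cu 0 2), ((0,1), cu 1 1),
             ((1,1), \<lambda>pt. 2 * cu 0 1 pt), ((0,2), \<lambda>pt. 2 * cu 1 0 pt)]"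
definition B7 :: lin where
  "B7 = mkL [((1,0), \<lambda>pt. cu 0 1 pt + cx pt * cu 1 1 pt + cy pt * cu 0 2 pt),
             ((0,1), \<lambda>pt. cu 1 0 pt + cy pt * cu 1 1 pt - cx pt * cu 0 2 pt),
             ((0,2), \<lambda>pt. 2 * (cy pt * cu 1 0 pt - cx pt * cu 0 1 pt)),
             ((1,1), \<lambda>pt. 2 * (cx pt * cu 1 0 pt + cy pt * cu 0 1 pt))]"
definition B8 :: lin where
  "B8 = mkL [((1,0), \<lambda>pt. - (cu 1 0 pt + cy pt * cu 1 1 pt - cx pt * cu 0 2 pt)),
             ((0,1), \<lambda>pt. cu 0 1 pt + cx pt * cu 1 1 pt + cy pt * cu 0 2 pt),
             ((0,2), \<lambda>pt. 2 * (cx pt * cu 1 0 pt + cy pt * cu 0 1 pt)),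
             ((1,1), \<lambda>pt. - 2 * (cy pt * cu 1 0 pt - cx pt * cu 0 1 pt))]"

definition B :: "nat \<Rightarrow> lin" where
  "B i = [B0, B1, B2, B3, B4, B5, B6, B7, B8] ! i"

end

theory Submission
  imports Defs
begin

definition good :: "jfun \<Rightarrow> bool" where
  "good g \<longleftrightarrow> continuous_on UNIV g \<and> (\<forall>v pt. (\<lambda>t. g (pt(v := t))) differentiable (at (pt v)))"

definition findep :: "jfun \<Rightarrow> bool" where
  "findep f \<longleftrightarrow> (\<exists>S. finite S \<and> (\<forall>pt pt'. (\<forall>v\<in>S. pt v = pt' v) \<longrightarrow> f pt = f pt'))"

lemma smooth_jet_iff: "smooth_jet f \<longleftrightarrow> findep f \<and> (\<forall>vs. good (pds vs f))"
  unfolding smooth_jet_def findep_def good_def by blast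

lemma good_hasd:
  assumes "good g"
  shows "((\<lambda>t. g (pt(v := t))) has_real_derivative pd v g (pt(v := t0))) (at t0)"
proof -
  have "(\<lambda>t. g ((pt(v := t0))(v := t))) differentiable (at ((pt(v := t0)) v))"
    using assms unfolding good_def by blast
  then have "(\<lambda>t. g (pt(v := t))) differentiable (at t0)" by simp
  then have "DERIV (\<lambda>t. g (pt(v := t))) t0 :> deriv (\<lambda>t. g (pt(v := t))) t0"
    using DERIV_deriv_iff_real_differentiable by blast
  moreover have "pd v g (pt(v := t0)) = deriv (\<lambda>t. g (pt(v := t))) t0"
    unfolding pd_def by simp
  ultimately show ?thesis by simp
qed

lemma good_hasd0:
  assumes "good g"
  shows "((\<lambda>t. g (pt(v := t))) has_real_derivative pd v g pt) (at (pt v))"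
  using good_hasd[OF assms, of pt v "pt v"] by simp

lemma pd_add:
  assumes "good f" "good g"
  shows "pd v (\<lambda>pt. f pt + g pt) = (\<lambda>pt. pd v f pt + pd v g pt)"
proof
  fix pt
  show "pd v (\<lambda>pt. f pt + g pt) pt = pd v f pt + pd v g pt"
    unfolding pd_def[of v "\<lambda>pt. f pt + g pt"]
    by (rule DERIV_imp_deriv, rule DERIV_add[OF good_hasd0[OF assms(1)] good_hasd0[OF assms(2)]])
qed

lemma pd_mult:
  assumes "good f" "good g"
  shows "pd v (\<lambda>pt. f pt * g pt) = (\<lambda>pt. pd v f pt * g pt + f pt * pd v g pt)"
proof
  fix pt
  show "pd v (\<lambda>pt. f pt * g pt) pt = pd v f pt * g pt + f pt * pd v g pt"
  proof -
    have "DERIV (\<lambda>t. f (pt(v := t)) * g (pt(v := t))) (pt v) :> pd v f pt * g pt + pd v g pt * f pt"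
      using DERIV_mult[OF good_hasd0[OF assms(1), of pt v] good_hasd0[OF assms(2), of pt v]] by simp
    then show ?thesis unfolding pd_def[of v "\<lambda>pt. f pt * g pt"]
      by (simp add: DERIV_imp_deriv mult.commute)
  qed
qed

lemma pd_const: "pd v (\<lambda>pt. c) = (\<lambda>pt. 0)"
  unfolding pd_def by simp

lemma pd_coord: "pd v (\<lambda>pt. pt w) = (\<lambda>pt. if v = w then 1 else 0)"
proof
  fix pt
  show "pd v (\<lambda>pt. pt w) pt = (if v = w then 1 else 0)"
  proof (cases "v = w")
    case True
    then show ?thesis unfolding pd_def by simp
  next
    case False
    then have "(\<lambda>t. (pt(v := t)) w) = (\<lambda>t. pt w)" by auto
    then show ?thesis using False unfolding pd_def by simp
  qed
qed

lemma good_const: "good (\<lambda>pt. c)"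
  unfolding good_def by simp

lemma good_coord: "good (\<lambda>pt. pt w)"
proof -
  have "(\<lambda>t. (pt(v := t)) w) differentiable (at (pt v))" for pt v
  proof (cases "v = w")
    case True
    then show ?thesis by simp
  next
    case False
    then have "(\<lambda>t. (pt(v := t)) w) = (\<lambda>t. pt w)" by auto
    then show ?thesis by simp
  qed
  moreover have "continuous_on UNIV (\<lambda>pt. pt w)" by simp
  ultimately show ?thesis unfolding good_def by blast
qed

lemma good_add: "good f \<Longrightarrow> good g \<Longrightarrow> good (\<lambda>pt. f pt + g pt)"
  unfolding good_def by (auto intro!: continuous_intros)

lemma good_mult: "good f \<Longrightarrow> good g \<Longrightarrow> good (\<lambda>pt. f pt * g pt)"
  unfolding good_def by (auto intro!: continuous_intros)

inductive alg :: "jfun set \<Rightarrow> jfun \<Rightarrow> bool" for F where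
  alg_base: "g \<in> F \<Longrightarrow> alg F g"
| alg_const: "alg F (\<lambda>pt. c)"
| alg_add: "alg F f \<Longrightarrow> alg F g \<Longrightarrow> alg F (\<lambda>pt. f pt + g pt)"
| alg_mult: "alg F f \<Longrightarrow> alg F g \<Longrightarrow> alg F (\<lambda>pt. f pt * g pt)"

lemma alg_good:
  assumes F: "\<And>g. g \<in> F \<Longrightarrow> good g \<and> (\<forall>v. pd v g \<in> F)"
  shows "alg F h \<Longrightarrow> good h \<and> (\<forall>v. alg F (pd v h))"
proof (induction rule: alg.induct)
  case (alg_base g)
  then show ?case using F by (auto intro: alg.alg_base)
next
  case (alg_const c)
  then show ?case by (auto simp: good_const pd_const intro: alg.alg_const)
next
  case (alg_add f g)
  then show ?case by (auto simp: good_add pd_add intro: alg.alg_add)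
next
  case (alg_mult f g)
  then show ?case by (auto simp: good_mult pd_mult intro!: alg.alg_add alg.alg_mult)
qed

lemma pds_append: "pds (vs @ ws) f = pds vs (pds ws f)"
  by (induction vs) auto

lemma alg_pds:
  assumes F: "\<And>g. g \<in> F \<Longrightarrow> good g \<and> (\<forall>v. pd v g \<in> F)"
  assumes "alg F h"
  shows "alg F (pds vs h) \<and> good (pds vs h)"
proof (induction vs)
  case Nil
  then show ?case using assms alg_good[OF F] by auto
next
  case (Cons v vs)
  then show ?case using alg_good[OF F] by auto
qed

lemma findep_pd:
  assumes "findep f" shows "findep (pd v f)"
proof -
  obtain S where S: "finite S" "\<And>pt pt'. (\<forall>v\<in>S. pt v = pt' v) \<Longrightarrow> f pt = f pt'"
    using assms unfolding findep_def by blast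
  have "pd v f pt = pd v f pt'" if "\<forall>w\<in>S. pt w = pt' w" for pt pt'
  proof (cases "v \<in> S")
    case True
    then have "(\<lambda>t. f (pt(v := t))) = (\<lambda>t. f (pt'(v := t)))"
      using that by (intro ext S(2)) auto
    moreover have "pt v = pt' v" using True that by auto
    ultimately show ?thesis unfolding pd_def by simp
  next
    case False
    then have "(\<lambda>t. f (pt(v := t))) = (\<lambda>t. f pt)" "(\<lambda>t. f (pt'(v := t))) = (\<lambda>t. f pt')"
      by (auto intro!: ext S(2))
    then show ?thesis unfolding pd_def by simp
  qed
  then show ?thesis using S(1) unfolding findep_def by blast
qed

lemma pd_indep:
  assumes S: "\<And>pt pt'. (\<forall>v\<in>S. pt v = pt' v) \<Longrightarrow> f pt = f pt'" and "v \<notin> S"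
  shows "pd v f = (\<lambda>pt. 0)"
proof
  fix pt
  have "(\<lambda>t. f (pt(v := t))) = (\<lambda>t. f pt)" using assms by (auto intro!: ext S)
  then show "pd v f pt = 0" unfolding pd_def by simp
qed

lemma findep_const: "findep (\<lambda>pt. c)"
  unfolding findep_def by auto

lemma findep_coord: "findep (\<lambda>pt. pt w)"
  unfolding findep_def by (rule exI[of _ "{w}"]) auto

lemma findep_add: "findep f \<Longrightarrow> findep g \<Longrightarrow> findep (\<lambda>pt. f pt + g pt)"
proof -
  assume "findep f" "findep g"
  then obtain S T where S: "finite S" "\<And>pt pt'. (\<forall>v\<in>S. pt v = pt' v) \<Longrightarrow> f pt = f pt'"
    and T: "finite T" "\<And>pt pt'. (\<forall>v\<in>T. pt v = pt' v) \<Longrightarrow> g pt = g pt'"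
    unfolding findep_def by blast
  have "f pt + g pt = f pt' + g pt'" if "\<forall>v\<in>S \<union> T. pt v = pt' v" for pt pt'
    using S(2)[of pt pt'] T(2)[of pt pt'] that by auto
  then show ?thesis unfolding findep_def using S(1) T(1) by (metis finite_UnI)
qed

lemma findep_mult: "findep f \<Longrightarrow> findep g \<Longrightarrow> findep (\<lambda>pt. f pt * g pt)"
proof -
  assume "findep f" "findep g"
  then obtain S T where S: "finite S" "\<And>pt pt'. (\<forall>v\<in>S. pt v = pt' v) \<Longrightarrow> f pt = f pt'"
    and T: "finite T" "\<And>pt pt'. (\<forall>v\<in>T. pt v = pt' v) \<Longrightarrow> g pt = g pt'"
    unfolding findep_def by blast
  have "f pt * g pt = f pt' * g pt'" if "\<forall>v\<in>S \<union> T. pt v = pt' v" for pt pt'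
    using S(2)[of pt pt'] T(2)[of pt pt'] that by auto
  then show ?thesis unfolding findep_def using S(1) T(1) by (metis finite_UnI)
qed

definition pdsF :: "jfun \<Rightarrow> jfun set" where
  "pdsF f = range (\<lambda>vs. pds vs f)"

lemma pdsF_closed:
  assumes "smooth_jet f" "g \<in> pdsF f"
  shows "good g \<and> (\<forall>v. pd v g \<in> pdsF f)"
proof -
  obtain vs where g: "g = pds vs f" using assms(2) unfolding pdsF_def by auto
  have "pd v g \<in> pdsF f" for v
  proof -
    have "pd v g = pds (v # vs) f" using g by simp
    then show ?thesis unfolding pdsF_def by (metis rangeI)
  qed
  moreover have "good g" using assms(1) g unfolding smooth_jet_iff by auto
  ultimately show ?thesis by blast
qed

lemma smooth_binop:
  assumes f: "smooth_jet f" and g: "smooth_jet g"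
    and op: "\<And>F. alg F f \<Longrightarrow> alg F g \<Longrightarrow> alg F h"
    and fd: "findep h"
  shows "smooth_jet h"
proof -
  let ?F = "pdsF f \<union> pdsF g"
  have F: "\<And>k. k \<in> ?F \<Longrightarrow> good k \<and> (\<forall>v. pd v k \<in> ?F)"
    using pdsF_closed[OF f] pdsF_closed[OF g] by blast
  have "f \<in> ?F" "g \<in> ?F" unfolding pdsF_def by (auto intro: range_eqI[of _ _ "[]"])
  then have "alg ?F f" "alg ?F g" by (auto intro: alg_base)
  then have "alg ?F h" by (rule op)
  then show ?thesis using alg_pds[OF F] fd unfolding smooth_jet_iff by blast
qed

lemma smooth_add: "smooth_jet f \<Longrightarrow> smooth_jet g \<Longrightarrow> smooth_jet (\<lambda>pt. f pt + g pt)"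
  by (rule smooth_binop[where f=f and g=g]) (auto intro: alg_add findep_add simp: smooth_jet_iff)

lemma smooth_mult: "smooth_jet f \<Longrightarrow> smooth_jet g \<Longrightarrow> smooth_jet (\<lambda>pt. f pt * g pt)"
  by (rule smooth_binop[where f=f and g=g]) (auto intro: alg_mult findep_mult simp: smooth_jet_iff)

lemma pds_const: "pds vs (\<lambda>pt. c) = (if vs = [] then (\<lambda>pt. c) else (\<lambda>pt. 0))"
  by (induction vs) (auto simp: pd_const)

lemma smooth_const: "smooth_jet (\<lambda>pt. c)"
  unfolding smooth_jet_iff by (auto simp: findep_const pds_const good_const)

lemma pds_coord: "pds vs (\<lambda>pt. pt w) = (\<lambda>pt. pt w) \<or> (\<exists>c. pds vs (\<lambda>pt. pt w) = (\<lambda>pt. c))"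
proof (induction vs)
  case Nil
  then show ?case by simp
next
  case (Cons v vs)
  then show ?case by (auto simp: pd_coord pd_const)
qed

lemma smooth_coord: "smooth_jet (\<lambda>pt. pt w)"
  unfolding smooth_jet_iff using pds_coord[of _ w] good_coord good_const findep_coord by metis

lemma smooth_pd: "smooth_jet f \<Longrightarrow> smooth_jet (pd v f)"
proof -
  assume a: "smooth_jet f"
  then have f: "findep f" "\<forall>vs. good (pds vs f)" by (simp_all add: smooth_jet_iff)
  have "pds vs (pd v f) = pds (vs @ [v]) f" for vs by (simp add: pds_append)
  then show ?thesis using findep_pd[OF f(1)] f(2) unfolding smooth_jet_iff by auto
qed

lemma smooth_pds: "smooth_jet f \<Longrightarrow> good (pds vs f)"
  unfolding smooth_jet_iff by blast

lemma smooth_good: "smooth_jet f \<Longrightarrow> good f"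
  using smooth_pds[of f "[]"] by simp

lemma smooth_neg: "smooth_jet f \<Longrightarrow> smooth_jet (\<lambda>pt. - f pt)"
  using smooth_mult[OF smooth_const[of "-1"]] by simp

lemma smooth_diff: "smooth_jet f \<Longrightarrow> smooth_jet g \<Longrightarrow> smooth_jet (\<lambda>pt. f pt - g pt)"
  using smooth_add[OF _ smooth_neg] by simp

lemma smooth_sum: "finite I \<Longrightarrow> (\<And>i. i \<in> I \<Longrightarrow> smooth_jet (f i)) \<Longrightarrow> smooth_jet (\<lambda>pt. \<Sum>i\<in>I. f i pt)"
  by (induction I rule: finite_induct) (auto intro: smooth_add smooth_const)

definition Dg :: "jvar \<Rightarrow> (nat \<times> nat \<Rightarrow> nat \<times> nat) \<Rightarrow> jfun \<Rightarrow> jfun" where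
  "Dg w sh f = (\<lambda>pt. pd w f pt +
      sum (\<lambda>s. pt (JU (sh s)) * pd (JU s) f pt) {s. pd (JU s) f \<noteq> (\<lambda>_. 0)})"

lemma DX_Dg: "DX = Dg JX (\<lambda>s. (fst s + 1, snd s))"
  by (simp add: fun_eq_iff DX_def Dg_def)

lemma DY_Dg: "DY = Dg JY (\<lambda>s. (fst s, snd s + 1))"
  by (simp add: fun_eq_iff DY_def Dg_def)

lemma smooth_supp:
  assumes "smooth_jet f"
  shows "\<exists>T. finite T \<and> (\<forall>s. s \<notin> T \<longrightarrow> pd (JU s) f = (\<lambda>_. 0))"
proof -
  obtain S where S: "finite S" "\<And>pt pt'. (\<forall>v\<in>S. pt v = pt' v) \<Longrightarrow> f pt = f pt'"
    using assms unfolding smooth_jet_iff findep_def by blast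
  have "finite (JU -` S)" using S(1) by (rule finite_vimageI) (simp add: inj_on_def)
  moreover have "pd (JU s) f = (\<lambda>_. 0)" if "s \<notin> JU -` S" for s
    using that by (intro pd_indep[of S]) (use S(2) in auto)
  ultimately show ?thesis by blast
qed

lemma Dg_eq:
  assumes "finite T" "\<forall>s. s \<notin> T \<longrightarrow> pd (JU s) f = (\<lambda>_. 0)"
  shows "Dg w sh f = (\<lambda>pt. pd w f pt + (\<Sum>s\<in>T. pt (JU (sh s)) * pd (JU s) f pt))"
proof
  fix pt
  have sub: "{s. pd (JU s) f \<noteq> (\<lambda>_. 0)} \<subseteq> T" using assms(2) by blast
  have "(\<Sum>s\<in>{s. pd (JU s) f \<noteq> (\<lambda>_. 0)}. pt (JU (sh s)) * pd (JU s) f pt)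
      = (\<Sum>s\<in>T. pt (JU (sh s)) * pd (JU s) f pt)"
    by (rule sum.mono_neutral_left[OF assms(1) sub]) auto
  then show "Dg w sh f pt = pd w f pt + (\<Sum>s\<in>T. pt (JU (sh s)) * pd (JU s) f pt)"
    unfolding Dg_def by simp
qed

lemma smooth_Dg:
  assumes "smooth_jet f" shows "smooth_jet (Dg w sh f)"
proof -
  obtain T where T: "finite T" "\<forall>s. s \<notin> T \<longrightarrow> pd (JU s) f = (\<lambda>_. 0)"
    using smooth_supp[OF assms] by blast
  show ?thesis unfolding Dg_eq[OF T]
    by (intro smooth_add smooth_pd assms smooth_sum T smooth_mult smooth_coord)
qed

lemma Dg_add:
  assumes f: "smooth_jet f" and g: "smooth_jet g"
  shows "Dg w sh (\<lambda>pt. f pt + g pt) = (\<lambda>pt. Dg w sh f pt + Dg w sh g pt)"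
proof -
  obtain T1 where T1: "finite T1" "\<And>s. s \<notin> T1 \<Longrightarrow> pd (JU s) f = (\<lambda>_. 0)"
    using smooth_supp[OF f] by blast
  obtain T2 where T2: "finite T2" "\<And>s. s \<notin> T2 \<Longrightarrow> pd (JU s) g = (\<lambda>_. 0)"
    using smooth_supp[OF g] by blast
  let ?T = "T1 \<union> T2"
  have fT: "finite ?T" using T1 T2 by simp
  have pa: "\<And>v. pd v (\<lambda>pt. f pt + g pt) = (\<lambda>pt. pd v f pt + pd v g pt)"
    using pd_add smooth_good f g by blast
  have a: "\<forall>s. s \<notin> ?T \<longrightarrow> pd (JU s) f = (\<lambda>_. 0)" using T1 by blast
  have b: "\<forall>s. s \<notin> ?T \<longrightarrow> pd (JU s) g = (\<lambda>_. 0)" using T2 by blast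
  have c: "\<forall>s. s \<notin> ?T \<longrightarrow> pd (JU s) (\<lambda>pt. f pt + g pt) = (\<lambda>_. 0)"
    using a b pa by simp
  show ?thesis
    unfolding Dg_eq[OF fT a] Dg_eq[OF fT b] Dg_eq[OF fT c] pa
    by (simp add: fun_eq_iff sum.distrib distrib_left)
qed

lemma sum_leibniz_aux:
  fixes G F :: real
  shows "(\<Sum>s\<in>T. u s * (a s * G + F * b s)) = (\<Sum>s\<in>T. u s * a s) * G + F * (\<Sum>s\<in>T. u s * b s)"
proof -
  have "(\<Sum>s\<in>T. u s * (a s * G + F * b s)) = (\<Sum>s\<in>T. (u s * a s) * G + F * (u s * b s))"
    by (simp add: algebra_simps)
  also have "\<dots> = (\<Sum>s\<in>T. u s * a s) * G + F * (\<Sum>s\<in>T. u s * b s)"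
    by (simp add: sum.distrib sum_distrib_left sum_distrib_right)
  finally show ?thesis .
qed

lemma Dg_mult:
  assumes f: "smooth_jet f" and g: "smooth_jet g"
  shows "Dg w sh (\<lambda>pt. f pt * g pt) = (\<lambda>pt. Dg w sh f pt * g pt + f pt * Dg w sh g pt)"
proof -
  obtain T1 where T1: "finite T1" "\<And>s. s \<notin> T1 \<Longrightarrow> pd (JU s) f = (\<lambda>_. 0)"
    using smooth_supp[OF f] by blast
  obtain T2 where T2: "finite T2" "\<And>s. s \<notin> T2 \<Longrightarrow> pd (JU s) g = (\<lambda>_. 0)"
    using smooth_supp[OF g] by blast
  let ?T = "T1 \<union> T2"
  have fT: "finite ?T" using T1 T2 by simp
  have pa: "\<And>v. pd v (\<lambda>pt. f pt * g pt) = (\<lambda>pt. pd v f pt * g pt + f pt * pd v g pt)"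
    using pd_mult smooth_good f g by blast
  have a: "\<forall>s. s \<notin> ?T \<longrightarrow> pd (JU s) f = (\<lambda>_. 0)" using T1 by blast
  have b: "\<forall>s. s \<notin> ?T \<longrightarrow> pd (JU s) g = (\<lambda>_. 0)" using T2 by blast
  have c: "\<forall>s. s \<notin> ?T \<longrightarrow> pd (JU s) (\<lambda>pt. f pt * g pt) = (\<lambda>_. 0)"
    using a b pa by simp
  show ?thesis
    unfolding Dg_eq[OF fT a] Dg_eq[OF fT b] Dg_eq[OF fT c] pa
    by (rule ext, simp only: sum_leibniz_aux, simp add: algebra_simps)
qed

lemma Dg_const: "Dg w sh (\<lambda>pt. c) = (\<lambda>pt. 0)"
proof -
  have "Dg w sh (\<lambda>pt. c) = (\<lambda>pt. pd w (\<lambda>pt. c) pt + (\<Sum>s\<in>{}. pt (JU (sh s)) * pd (JU s) (\<lambda>pt. c) pt))"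
    by (rule Dg_eq) (auto simp: pd_const)
  then show ?thesis by (simp add: pd_const)
qed

lemma Dg_coord:
  "Dg w sh (\<lambda>pt. pt v) = (\<lambda>pt. (if w = v then 1 else 0) + (case v of JU s \<Rightarrow> pt (JU (sh s)) | _ \<Rightarrow> 0))"
proof -
  have "Dg w sh (\<lambda>pt. pt v) = (\<lambda>pt. pd w (\<lambda>pt. pt v) pt +
         (\<Sum>s\<in>{s. JU s = v}. pt (JU (sh s)) * pd (JU s) (\<lambda>pt. pt v) pt))"
  proof (rule Dg_eq)
    show "finite {s. JU s = v}" by (cases v) auto
  qed (auto simp: pd_coord)
  moreover have "{s. JU s = v} = (case v of JU s \<Rightarrow> {s} | _ \<Rightarrow> {})" by (cases v) auto
  ultimately show ?thesis by (cases v) (auto simp: pd_coord)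
qed

lemma smooth_DX: "smooth_jet f \<Longrightarrow> smooth_jet (DX f)"
  unfolding DX_Dg by (rule smooth_Dg)
lemma smooth_DY: "smooth_jet f \<Longrightarrow> smooth_jet (DY f)"
  unfolding DY_Dg by (rule smooth_Dg)

lemmas DX_add = Dg_add[where w=JX and sh="\<lambda>s. (fst s + 1, snd s)", folded DX_Dg]
lemmas DY_add = Dg_add[where w=JY and sh="\<lambda>s. (fst s, snd s + 1)", folded DY_Dg]
lemmas DX_mult = Dg_mult[where w=JX and sh="\<lambda>s. (fst s + 1, snd s)", folded DX_Dg]
lemmas DY_mult = Dg_mult[where w=JY and sh="\<lambda>s. (fst s, snd s + 1)", folded DY_Dg]
lemmas DX_const = Dg_const[where w=JX and sh="\<lambda>s. (fst s + 1, snd s)", folded DX_Dg]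
lemmas DY_const = Dg_const[where w=JY and sh="\<lambda>s. (fst s, snd s + 1)", folded DY_Dg]

lemma DX_coord: "DX (\<lambda>pt. pt v) = (\<lambda>pt. (if v = JX then 1 else 0) + (case v of JU s \<Rightarrow> pt (JU (fst s + 1, snd s)) | _ \<Rightarrow> 0))"
  unfolding DX_Dg Dg_coord by (auto simp: fun_eq_iff)
lemma DY_coord: "DY (\<lambda>pt. pt v) = (\<lambda>pt. (if v = JY then 1 else 0) + (case v of JU s \<Rightarrow> pt (JU (fst s, snd s + 1)) | _ \<Rightarrow> 0))"
  unfolding DY_Dg Dg_coord by (auto simp: fun_eq_iff)

lemma Dg_cmult: "smooth_jet f \<Longrightarrow> Dg w sh (\<lambda>pt. a * f pt) = (\<lambda>pt. a * Dg w sh f pt)"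
  using Dg_mult[OF smooth_const[of a], of f w sh] by (simp add: Dg_const)

lemma Dg_diff: "smooth_jet f \<Longrightarrow> smooth_jet g \<Longrightarrow> Dg w sh (\<lambda>pt. f pt - g pt) = (\<lambda>pt. Dg w sh f pt - Dg w sh g pt)"
  using Dg_add[OF _ smooth_mult[OF smooth_const[of "-1"]], of f g w sh] Dg_cmult[of g w sh "-1"]
  by (simp add: smooth_const)

lemma Dg_sum: "finite I \<Longrightarrow> (\<And>i. i \<in> I \<Longrightarrow> smooth_jet (f i)) \<Longrightarrow>
   Dg w sh (\<lambda>pt. \<Sum>i\<in>I. f i pt) = (\<lambda>pt. \<Sum>i\<in>I. Dg w sh (f i) pt)"
proof (induction I rule: finite_induct)
  case empty
  then show ?case by (simp add: Dg_const)
next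
  case (insert x F)
  then show ?case by (simp add: Dg_add smooth_sum)
qed

fun DW :: "bool list \<Rightarrow> jfun \<Rightarrow> jfun" where
  "DW [] f = f"
| "DW (b # w) f = DW w (if b then DX f else DY f)"

lemma smooth_DW: "smooth_jet f \<Longrightarrow> smooth_jet (DW w f)"
  by (induction w arbitrary: f) (auto simp: smooth_DX smooth_DY)

lemma DW_add: "smooth_jet f \<Longrightarrow> smooth_jet g \<Longrightarrow> DW w (\<lambda>pt. f pt + g pt) = (\<lambda>pt. DW w f pt + DW w g pt)"
  by (induction w arbitrary: f g) (auto simp: DX_Dg DY_Dg Dg_add smooth_Dg)

lemma DW_cmult: "smooth_jet f \<Longrightarrow> DW w (\<lambda>pt. a * f pt) = (\<lambda>pt. a * DW w f pt)"
  by (induction w arbitrary: f) (auto simp: DX_Dg DY_Dg Dg_cmult smooth_Dg)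

lemma DW_diff: "smooth_jet f \<Longrightarrow> smooth_jet g \<Longrightarrow> DW w (\<lambda>pt. f pt - g pt) = (\<lambda>pt. DW w f pt - DW w g pt)"
  by (induction w arbitrary: f g) (auto simp: DX_Dg DY_Dg Dg_diff smooth_Dg)

lemma DW_const: "DW w (\<lambda>pt. c) = (if w = [] then (\<lambda>pt. c) else (\<lambda>pt. 0))"
  by (induction w arbitrary: c) (auto simp: DX_const DY_const)

definition Fl :: "nat \<times> nat \<Rightarrow> jfun" where
  "Fl s = (\<lambda>pt. pt (JU (fst s + 2, snd s)) + pt (JU (fst s, snd s + 2)))"

lemma smooth_Fl: "smooth_jet (Fl s)"
  unfolding Fl_def by (intro smooth_add smooth_coord)

lemma DX_Fl: "DX (Fl s) = Fl (fst s + 1, snd s)"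
  unfolding Fl_def by (simp add: DX_add smooth_coord DX_coord)

lemma DY_Fl: "DY (Fl s) = Fl (fst s, snd s + 1)"
  unfolding Fl_def by (simp add: DY_add smooth_coord DY_coord)

lemma DY_pow_Flap: "(DY ^^ b) Flap = Fl (0, b)"
proof (induction b)
  case 0
  then show ?case by (simp add: Flap_def Fl_def numeral_2_eq_2)
next
  case (Suc b)
  then show ?case by (simp add: DY_Fl)
qed

lemma DX_pow_Fl: "(DX ^^ a) (Fl (0, b)) = Fl (a, b)"
proof (induction a)
  case 0
  then show ?case by simp
next
  case (Suc a)
  then show ?case by (simp add: DX_Fl)
qed

lemma Dm_Flap: "Dm s Flap = Fl s"
  unfolding Dm_def DY_pow_Flap DX_pow_Fl by simp

lemma onE_Fl: "onE pt \<Longrightarrow> Fl s pt = 0"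
  unfolding onE_def Fl_def by (metis add.commute)

section \<open>Syzygies\<close>

definition bx :: "nat \<Rightarrow> (nat \<times> nat) set" where
  "bx N = {..N} \<times> {..N}"

lemma finite_bx: "finite (bx N)"
  unfolding bx_def by simp

lemma bx_mono: "bx N \<subseteq> bx (Suc N)"
  unfolding bx_def by auto

lemma finite_in_box:
  assumes "finite (A :: (nat \<times> nat) set)" shows "\<exists>N. A \<subseteq> bx N"
proof -
  have "finite (fst ` A)" "finite (snd ` A)" using assms by auto
  then obtain N1 N2 where "\<forall>x\<in>fst ` A. x \<le> N1" "\<forall>x\<in>snd ` A. x \<le> N2"
    using finite_nat_set_iff_bounded_le by meson
  then have "A \<subseteq> bx (max N1 N2)" unfolding bx_def by force
  then show ?thesis by blast
qed

definition syz :: "(nat \<times> nat \<Rightarrow> jfun) \<Rightarrow> nat \<Rightarrow> bool" where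
  "syz d N \<longleftrightarrow> (\<forall>s. smooth_jet (d s)) \<and> (\<forall>s. s \<notin> bx N \<longrightarrow> d s = (\<lambda>_. 0)) \<and>
     (\<forall>pt. (\<Sum>s\<in>bx N. d s pt * Fl s pt) = 0)"

definition pert :: "nat \<times> nat \<Rightarrow> jvar \<Rightarrow> real" where
  "pert s0 v = (case v of JU ab \<Rightarrow>
      if fst ab \<le> fst s0 \<and> even (fst s0 - fst ab) \<and> fst ab + snd ab = fst s0 + snd s0 + 2
      then (-1) ^ ((fst s0 - fst ab) div 2) else 0 | _ \<Rightarrow> 0)"

lemma pert_Fl:
  "pert s0 (JU (i + 2, j)) + pert s0 (JU (i, j + 2)) = (if (i, j) = s0 then 1 else 0)"
proof -
  obtain i0 j0 where s0: "s0 = (i0, j0)" by (cases s0)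
  show ?thesis
  proof (cases "i + j = i0 + j0")
    case False
    then show ?thesis unfolding pert_def s0 by auto
  next
    case T: True
    show ?thesis
    proof (cases "i0 < i")
      case True
      then show ?thesis unfolding pert_def s0 by auto
    next
      case False
      then obtain m where m: "i0 = i + m" by (metis le_add_diff_inverse not_less)
      show ?thesis
      proof (cases "m = 0")
        case True
        then show ?thesis unfolding pert_def s0 using m T by auto
      next
        case m0: False
        show ?thesis
        proof (cases "even m")
          case False
          then have "\<not> even (i0 - i)" "\<not> (i + 2 \<le> i0 \<and> even (i0 - (i + 2)))"
            using m by auto
          then show ?thesis unfolding pert_def s0 using m m0 T by auto
        next
          case True
          then obtain k' where k': "m = 2 * k'" by (auto elim: evenE)
          then have "k' \<noteq> 0" using m0 by auto
          then obtain k where k: "m = 2 * k + 2" using k'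
            by (metis Suc_pred add.commute add_2_eq_Suc' mult_Suc_right neq0_conv)
          have a: "(i0 - i) div 2 = k + 1" using m k by simp
          have b: "(i0 - (i + 2)) div 2 = k" using m k by simp
          have "(i, j) \<noteq> s0" using s0 m k by auto
          moreover have "i + 2 \<le> i0" "even (i0 - (i + 2))" "even (i0 - i)" "i \<le> i0"
            using m k by auto
          ultimately show ?thesis unfolding pert_def s0 using T a b by auto
        qed
      qed
    qed
  qed
qed

lemma Fl_pert:
  assumes "onE pt"
  shows "Fl s (\<lambda>v. pt v + t * pert s0 v) = t * (if s = s0 then 1 else 0)"
proof -
  have "Fl s (\<lambda>v. pt v + t * pert s0 v) = Fl s pt +
        t * (pert s0 (JU (fst s + 2, snd s)) + pert s0 (JU (fst s, snd s + 2)))"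
    unfolding Fl_def by (simp add: algebra_simps)
  also have "\<dots> = t * (if s = s0 then 1 else 0)"
    using onE_Fl[OF assms] pert_Fl[of s0 "fst s" "snd s"] by simp
  finally show ?thesis .
qed

lemma syz_zeroE:
  assumes syz: "syz d N" and E: "onE pt"
  shows "d s0 pt = 0"
proof (cases "s0 \<in> bx N")
  case False
  then have "d s0 = (\<lambda>_. 0)" using syz unfolding syz_def by blast
  then show ?thesis by simp
next
  case True
  define q where "q t = (\<lambda>v. pt v + t * pert s0 v)" for t :: real
  define g where "g t = d s0 (q t)" for t
  have g0: "g t = 0" if "t \<noteq> 0" for t
  proof -
    have "0 = (\<Sum>s\<in>bx N. d s (q t) * Fl s (q t))" using syz unfolding syz_def by auto
    also have "\<dots> = (\<Sum>s\<in>bx N. (if s = s0 then t * d s (q t) else 0))"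
      unfolding q_def Fl_pert[OF E] by (intro sum.cong) auto
    also have "\<dots> = t * g t" using True finite_bx by (simp add: g_def)
    finally show ?thesis using that by simp
  qed
  have cq: "continuous_on UNIV q"
    unfolding q_def by (intro continuous_on_coordinatewise_then_product continuous_intros)
  have cd: "continuous_on UNIV (d s0)"
    using syz smooth_good unfolding syz_def good_def by blast
  have cg: "continuous_on UNIV g"
    unfolding g_def using continuous_on_compose2[OF cd cq] by auto
  then have "(g \<longlongrightarrow> g 0) (at 0)"
    by (simp add: continuous_on_def)
  moreover have "(g \<longlongrightarrow> 0) (at 0)"
  proof (rule tendsto_eventually)
    show "\<forall>\<^sub>F t in at 0. g t = 0" using g0 eventually_at_filter by (simp add: eventually_at_filter)
  qed
  ultimately have "g 0 = 0" using tendsto_unique[OF at_neq_bot] by blast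
  moreover have "q 0 = pt" unfolding q_def by simp
  ultimately show ?thesis unfolding g_def by simp
qed

definition shX :: "(nat \<times> nat \<Rightarrow> jfun) \<Rightarrow> nat \<times> nat \<Rightarrow> jfun" where
  "shX d s = (if 0 < fst s then d (fst s - 1, snd s) else (\<lambda>_. 0))"
definition shY :: "(nat \<times> nat \<Rightarrow> jfun) \<Rightarrow> nat \<times> nat \<Rightarrow> jfun" where
  "shY d s = (if 0 < snd s then d (fst s, snd s - 1) else (\<lambda>_. 0))"

lemma DX_zero: "DX (\<lambda>_. 0) = (\<lambda>_. 0)" using DX_const by simp
lemma DY_zero: "DY (\<lambda>_. 0) = (\<lambda>_. 0)" using DY_const by simp

lemma sum_shX:
  assumes supp: "\<forall>s. s \<notin> bx N \<longrightarrow> d s = (\<lambda>_. 0)"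
  shows "(\<Sum>s\<in>bx (Suc N). shX d s pt * Fl s pt) = (\<Sum>s\<in>bx N. d s pt * Fl (fst s + 1, snd s) pt)"
proof -
  let ?h = "\<lambda>s::nat\<times>nat. (fst s + 1, snd s)"
  have inj: "inj_on ?h (bx N)" by (auto simp: inj_on_def)
  have "(\<Sum>s\<in>bx N. d s pt * Fl (fst s + 1, snd s) pt) = (\<Sum>s\<in>?h ` bx N. shX d s pt * Fl s pt)"
    by (subst sum.reindex[OF inj]) (simp add: shX_def)
  also have "\<dots> = (\<Sum>s\<in>bx (Suc N). shX d s pt * Fl s pt)"
  proof (rule sum.mono_neutral_left[OF finite_bx])
    show "?h ` bx N \<subseteq> bx (Suc N)" unfolding bx_def by auto
    show "\<forall>i\<in>bx (Suc N) - ?h ` bx N. shX d i pt * Fl i pt = 0"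
    proof
      fix i assume i: "i \<in> bx (Suc N) - ?h ` bx N"
      show "shX d i pt * Fl i pt = 0"
      proof (cases "0 < fst i")
        case True
        then have "(fst i - 1, snd i) \<notin> bx N"
          using i by (metis (no_types, lifting) DiffD2 Suc_diff_1 Suc_eq_plus1 fst_conv image_eqI prod.collapse snd_conv)
        then show ?thesis using True supp[rule_format] by (simp add: shX_def)
      qed (simp add: shX_def)
    qed
  qed
  finally show ?thesis by simp
qed

lemma sum_shY:
  assumes supp: "\<forall>s. s \<notin> bx N \<longrightarrow> d s = (\<lambda>_. 0)"
  shows "(\<Sum>s\<in>bx (Suc N). shY d s pt * Fl s pt) = (\<Sum>s\<in>bx N. d s pt * Fl (fst s, snd s + 1) pt)"
proof -
  let ?h = "\<lambda>s::nat\<times>nat. (fst s, snd s + 1)"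
  have inj: "inj_on ?h (bx N)" by (auto simp: inj_on_def)
  have "(\<Sum>s\<in>bx N. d s pt * Fl (fst s, snd s + 1) pt) = (\<Sum>s\<in>?h ` bx N. shY d s pt * Fl s pt)"
    by (subst sum.reindex[OF inj]) (simp add: shY_def)
  also have "\<dots> = (\<Sum>s\<in>bx (Suc N). shY d s pt * Fl s pt)"
  proof (rule sum.mono_neutral_left[OF finite_bx])
    show "?h ` bx N \<subseteq> bx (Suc N)" unfolding bx_def by auto
    show "\<forall>i\<in>bx (Suc N) - ?h ` bx N. shY d i pt * Fl i pt = 0"
    proof
      fix i assume i: "i \<in> bx (Suc N) - ?h ` bx N"
      show "shY d i pt * Fl i pt = 0"
      proof (cases "0 < snd i")
        case True
        then have "(fst i, snd i - 1) \<notin> bx N"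
          using i by (metis (no_types, lifting) DiffD2 Suc_diff_1 Suc_eq_plus1 fst_conv image_eqI prod.collapse snd_conv)
        then show ?thesis using True supp[rule_format] by (simp add: shY_def)
      qed (simp add: shY_def)
    qed
  qed
  finally show ?thesis by simp
qed

lemma smooth_shX: "(\<forall>s. smooth_jet (d s)) \<Longrightarrow> smooth_jet (shX d s)"
  unfolding shX_def by (auto simp: smooth_const)
lemma smooth_shY: "(\<forall>s. smooth_jet (d s)) \<Longrightarrow> smooth_jet (shY d s)"
  unfolding shY_def by (auto simp: smooth_const)

lemma syz_DX:
  assumes "syz d N"
  shows "syz (\<lambda>s pt. DX (d s) pt + shX d s pt) (Suc N)"
proof -
  have sm: "\<forall>s. smooth_jet (d s)" and supp: "\<forall>s. s \<notin> bx N \<longrightarrow> d s = (\<lambda>_. 0)"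
    and id: "\<forall>pt. (\<Sum>s\<in>bx N. d s pt * Fl s pt) = 0" using assms unfolding syz_def by auto
  have "(\<lambda>pt. \<Sum>s\<in>bx N. d s pt * Fl s pt) = (\<lambda>_. 0)" using id by auto
  then have "DX (\<lambda>pt. \<Sum>s\<in>bx N. d s pt * Fl s pt) = (\<lambda>_. 0)" by (simp add: DX_zero)
  moreover have "DX (\<lambda>pt. \<Sum>s\<in>bx N. d s pt * Fl s pt) = (\<lambda>pt. \<Sum>s\<in>bx N. DX (\<lambda>pt. d s pt * Fl s pt) pt)"
    unfolding DX_Dg by (rule Dg_sum) (use sm in \<open>auto intro: smooth_mult smooth_Fl finite_bx\<close>)
  moreover have "DX (\<lambda>pt. d s pt * Fl s pt) = (\<lambda>pt. DX (d s) pt * Fl s pt + d s pt * Fl (fst s + 1, snd s) pt)" for s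
    using DX_mult[OF sm[rule_format] smooth_Fl, of s s] DX_Fl by simp
  ultimately have Z: "(\<lambda>pt. \<Sum>s\<in>bx N. DX (d s) pt * Fl s pt + d s pt * Fl (fst s + 1, snd s) pt) = (\<lambda>_. 0)"
    by simp
  have s1: "smooth_jet (\<lambda>pt. DX (d s) pt + shX d s pt)" for s
    by (intro smooth_add smooth_DX smooth_shX sm sm[rule_format])
  have s2: "s \<notin> bx (Suc N) \<Longrightarrow> (\<lambda>pt. DX (d s) pt + shX d s pt) = (\<lambda>_. 0)" for s
  proof -
    assume s: "s \<notin> bx (Suc N)"
    then have "s \<notin> bx N" using bx_mono by blast
    then have a: "DX (d s) = (\<lambda>_. 0)" using supp[rule_format] DX_zero by simp
    have "shX d s = (\<lambda>_. 0)"
    proof (cases "0 < fst s")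
      case True
      then have "(fst s - 1, snd s) \<notin> bx N" using s unfolding bx_def by (cases s) auto
      then show ?thesis using True supp[rule_format] by (simp add: shX_def)
    qed (simp add: shX_def)
    then show ?thesis using a by simp
  qed
  have s3: "(\<Sum>s\<in>bx (Suc N). (DX (d s) pt + shX d s pt) * Fl s pt) = 0" for pt
  proof -
    have "(\<Sum>s\<in>bx (Suc N). (DX (d s) pt + shX d s pt) * Fl s pt)
       = (\<Sum>s\<in>bx (Suc N). DX (d s) pt * Fl s pt) + (\<Sum>s\<in>bx (Suc N). shX d s pt * Fl s pt)"
      by (simp add: distrib_right sum.distrib)
    also have "(\<Sum>s\<in>bx (Suc N). DX (d s) pt * Fl s pt) = (\<Sum>s\<in>bx N. DX (d s) pt * Fl s pt)"
      by (rule sum.mono_neutral_right[OF finite_bx bx_mono]) (use supp[rule_format] DX_zero in auto)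
    also have "(\<Sum>s\<in>bx (Suc N). shX d s pt * Fl s pt) = (\<Sum>s\<in>bx N. d s pt * Fl (fst s + 1, snd s) pt)"
      by (rule sum_shX[OF supp])
    finally show ?thesis using fun_cong[OF Z, of pt] by (simp add: sum.distrib)
  qed
  show ?thesis unfolding syz_def using s1 s2 s3 by auto
qed

lemma syz_DY:
  assumes "syz d N"
  shows "syz (\<lambda>s pt. DY (d s) pt + shY d s pt) (Suc N)"
proof -
  have sm: "\<forall>s. smooth_jet (d s)" and supp: "\<forall>s. s \<notin> bx N \<longrightarrow> d s = (\<lambda>_. 0)"
    and id: "\<forall>pt. (\<Sum>s\<in>bx N. d s pt * Fl s pt) = 0" using assms unfolding syz_def by auto
  have "(\<lambda>pt. \<Sum>s\<in>bx N. d s pt * Fl s pt) = (\<lambda>_. 0)" using id by auto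
  then have "DY (\<lambda>pt. \<Sum>s\<in>bx N. d s pt * Fl s pt) = (\<lambda>_. 0)" by (simp add: DY_zero)
  moreover have "DY (\<lambda>pt. \<Sum>s\<in>bx N. d s pt * Fl s pt) = (\<lambda>pt. \<Sum>s\<in>bx N. DY (\<lambda>pt. d s pt * Fl s pt) pt)"
    unfolding DY_Dg by (rule Dg_sum) (use sm in \<open>auto intro: smooth_mult smooth_Fl finite_bx\<close>)
  moreover have "DY (\<lambda>pt. d s pt * Fl s pt) = (\<lambda>pt. DY (d s) pt * Fl s pt + d s pt * Fl (fst s, snd s + 1) pt)" for s
    using DY_mult[OF sm[rule_format] smooth_Fl, of s s] DY_Fl by simp
  ultimately have Z: "(\<lambda>pt. \<Sum>s\<in>bx N. DY (d s) pt * Fl s pt + d s pt * Fl (fst s, snd s + 1) pt) = (\<lambda>_. 0)"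
    by simp
  have s1: "smooth_jet (\<lambda>pt. DY (d s) pt + shY d s pt)" for s
    by (intro smooth_add smooth_DY smooth_shY sm sm[rule_format])
  have s2: "s \<notin> bx (Suc N) \<Longrightarrow> (\<lambda>pt. DY (d s) pt + shY d s pt) = (\<lambda>_. 0)" for s
  proof -
    assume s: "s \<notin> bx (Suc N)"
    then have "s \<notin> bx N" using bx_mono by blast
    then have a: "DY (d s) = (\<lambda>_. 0)" using supp[rule_format] DY_zero by simp
    have "shY d s = (\<lambda>_. 0)"
    proof (cases "0 < snd s")
      case True
      then have "(fst s, snd s - 1) \<notin> bx N" using s unfolding bx_def by (cases s) auto
      then show ?thesis using True supp[rule_format] by (simp add: shY_def)
    qed (simp add: shY_def)
    then show ?thesis using a by simp
  qed
  have s3: "(\<Sum>s\<in>bx (Suc N). (DY (d s) pt + shY d s pt) * Fl s pt) = 0" for pt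
  proof -
    have "(\<Sum>s\<in>bx (Suc N). (DY (d s) pt + shY d s pt) * Fl s pt)
       = (\<Sum>s\<in>bx (Suc N). DY (d s) pt * Fl s pt) + (\<Sum>s\<in>bx (Suc N). shY d s pt * Fl s pt)"
      by (simp add: distrib_right sum.distrib)
    also have "(\<Sum>s\<in>bx (Suc N). DY (d s) pt * Fl s pt) = (\<Sum>s\<in>bx N. DY (d s) pt * Fl s pt)"
      by (rule sum.mono_neutral_right[OF finite_bx bx_mono]) (use supp[rule_format] DY_zero in auto)
    also have "(\<Sum>s\<in>bx (Suc N). shY d s pt * Fl s pt) = (\<Sum>s\<in>bx N. d s pt * Fl (fst s, snd s + 1) pt)"
      by (rule sum_shY[OF supp])
    finally show ?thesis using fun_cong[OF Z, of pt] by (simp add: sum.distrib)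
  qed
  show ?thesis unfolding syz_def using s1 s2 s3 by auto
qed

lemma syz_DW:
  assumes "syz d N" "onE pt"
  shows "DW w (d s) pt = 0"
  using assms(1)
proof (induction w arbitrary: d N s)
  case Nil
  then show ?case using syz_zeroE[OF _ assms(2)] by simp
next
  case (Cons b w)
  have sm: "\<forall>s. smooth_jet (d s)" using Cons.prems unfolding syz_def by auto
  show ?case
  proof (cases b)
    case True
    let ?d' = "\<lambda>s pt. DX (d s) pt + shX d s pt"
    have e: "DX (d s) = (\<lambda>pt. ?d' s pt - shX d s pt)" by simp
    have f: "DW w (\<lambda>pt. ?d' s pt - shX d s pt) = (\<lambda>pt. DW w (?d' s) pt - DW w (shX d s) pt)"
      by (intro DW_diff smooth_add smooth_DX smooth_shX sm sm[rule_format])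
    have "DW w (DX (d s)) = (\<lambda>pt. DW w (?d' s) pt - DW w (shX d s) pt)"
      by (subst e) (rule f)
    moreover have "DW w (?d' s) pt = 0" using Cons.IH[OF syz_DX[OF Cons.prems]] by blast
    moreover have "DW w (shX d s) pt = 0"
    proof (cases "0 < fst s")
      case True
      then show ?thesis using Cons.IH[OF Cons.prems] by (simp add: shX_def)
    next
      case False
      then show ?thesis by (simp add: shX_def DW_const)
    qed
    ultimately show ?thesis using True by simp
  next
    case False
    let ?d' = "\<lambda>s pt. DY (d s) pt + shY d s pt"
    have e: "DY (d s) = (\<lambda>pt. ?d' s pt - shY d s pt)" by simp
    have f: "DW w (\<lambda>pt. ?d' s pt - shY d s pt) = (\<lambda>pt. DW w (?d' s) pt - DW w (shY d s) pt)"
      by (intro DW_diff smooth_add smooth_DY smooth_shY sm sm[rule_format])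
    have "DW w (DY (d s)) = (\<lambda>pt. DW w (?d' s) pt - DW w (shY d s) pt)"
      by (subst e) (rule f)
    moreover have "DW w (?d' s) pt = 0" using Cons.IH[OF syz_DY[OF Cons.prems]] by blast
    moreover have "DW w (shY d s) pt = 0"
    proof (cases "0 < snd s")
      case True
      then show ?thesis using Cons.IH[OF Cons.prems] by (simp add: shY_def)
    next
      case False
      then show ?thesis by (simp add: shY_def DW_const)
    qed
    ultimately show ?thesis using False by simp
  qed
qed

definition agree :: "jfun \<Rightarrow> jfun \<Rightarrow> bool" where
  "agree f g \<longleftrightarrow> smooth_jet f \<and> smooth_jet g \<and> (\<forall>w pt. onE pt \<longrightarrow> DW w f pt = DW w g pt)"

lemma agree_refl: "smooth_jet f \<Longrightarrow> agree f f"
  unfolding agree_def by simp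

lemma agree_zero: "agree (\<lambda>_. 0) (\<lambda>_. 0)"
  by (rule agree_refl) (rule smooth_const)

lemma agree_add: "agree f g \<Longrightarrow> agree f' g' \<Longrightarrow> agree (\<lambda>pt. f pt + f' pt) (\<lambda>pt. g pt + g' pt)"
  unfolding agree_def by (auto simp: DW_add smooth_add)

lemma agree_cmult: "agree f g \<Longrightarrow> agree (\<lambda>pt. a * f pt) (\<lambda>pt. a * g pt)"
  unfolding agree_def by (auto simp: DW_cmult smooth_mult smooth_const)

lemma agree_sum: "finite I \<Longrightarrow> (\<And>i. i \<in> I \<Longrightarrow> agree (f i) (g i)) \<Longrightarrow>
   agree (\<lambda>pt. \<Sum>i\<in>I. f i pt) (\<lambda>pt. \<Sum>i\<in>I. g i pt)"
proof (induction I rule: finite_induct)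
  case empty
  then show ?case using agree_zero by simp
next
  case (insert x F)
  then show ?case by (simp add: agree_add)
qed

lemma agree_DX: "agree f g \<Longrightarrow> agree (DX f) (DX g)"
  unfolding agree_def
proof (intro conjI allI impI)
  assume a: "smooth_jet f \<and> smooth_jet g \<and> (\<forall>w pt. onE pt \<longrightarrow> DW w f pt = DW w g pt)"
  then show "smooth_jet (DX f)" "smooth_jet (DX g)" by (auto intro: smooth_DX)
  fix w pt assume "onE pt"
  then show "DW w (DX f) pt = DW w (DX g) pt" using a[THEN conjunct2, THEN conjunct2, rule_format, of pt "True # w"] by simp
qed

lemma agree_DY: "agree f g \<Longrightarrow> agree (DY f) (DY g)"
  unfolding agree_def
proof (intro conjI allI impI)
  assume a: "smooth_jet f \<and> smooth_jet g \<and> (\<forall>w pt. onE pt \<longrightarrow> DW w f pt = DW w g pt)"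
  then show "smooth_jet (DY f)" "smooth_jet (DY g)" by (auto intro: smooth_DY)
  fix w pt assume "onE pt"
  then show "DW w (DY f) pt = DW w (DY g) pt" using a[THEN conjunct2, THEN conjunct2, rule_format, of pt "False # w"] by simp
qed

lemma agree_if: "(C \<Longrightarrow> agree f g) \<Longrightarrow> agree (\<lambda>pt. if C then f pt else 0) (\<lambda>pt. if C then g pt else 0)"
  by (cases C) (simp_all add: agree_zero)

lemma agree_onE: "agree f g \<Longrightarrow> onE pt \<Longrightarrow> f pt = g pt"
  unfolding agree_def using DW.simps(1) by metis

definition qagree :: "quad \<Rightarrow> quad \<Rightarrow> bool" where
  "qagree q q' \<longleftrightarrow> (\<forall>r k. agree (q r k) (q' r k))"

lemma qagree_QDX: "qagree q q' \<Longrightarrow> qagree (QDX q) (QDX q')"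
  unfolding qagree_def QDX_def
  by (intro allI agree_add agree_DX agree_if) auto

lemma qagree_QDY: "qagree q q' \<Longrightarrow> qagree (QDY q) (QDY q')"
  unfolding qagree_def QDY_def
  by (intro allI agree_add agree_DY agree_if) auto

lemma qagree_pow: "(\<And>q q'. qagree q q' \<Longrightarrow> qagree (F q) (F q')) \<Longrightarrow> qagree q q' \<Longrightarrow>
   qagree ((F ^^ n) q) ((F ^^ n) q')"
  by (induction n) auto

lemma qagree_QD: "qagree q q' \<Longrightarrow> qagree (QD s q) (QD s q')"
  unfolding QD_def by (intro qagree_pow[of QDX] qagree_pow[of QDY] qagree_QDX qagree_QDY)

definition HpS :: "(nat \<times> nat \<Rightarrow> nat \<times> nat \<Rightarrow> jfun) \<Rightarrow> (nat \<times> nat) set \<Rightarrow> quad" where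
  "HpS c S = (\<lambda>r k pt. - (1/2) * (\<Sum>s\<in>S.
      (-1) ^ (fst s + snd s) *
      QD s (\<lambda>r' k' pt'. if r' = (0,0) then c s k' pt' else 0) r k pt))"

lemma QDX_zero: "QDX (\<lambda>r k pt. 0) = (\<lambda>r k pt. 0)"
  by (simp add: QDX_def DX_zero fun_eq_iff)
lemma QDY_zero: "QDY (\<lambda>r k pt. 0) = (\<lambda>r k pt. 0)"
  by (simp add: QDY_def DY_zero fun_eq_iff)

lemma pow_zero: "F z = z \<Longrightarrow> (F ^^ n) z = z"
  by (induction n) auto

lemma QD_zero: "QD s (\<lambda>r k pt. 0) = (\<lambda>r k pt. 0)"
  unfolding QD_def by (simp add: pow_zero QDX_zero QDY_zero)

lemma sum_superset: "finite T \<Longrightarrow> S \<subseteq> T \<Longrightarrow> (\<And>i. i \<in> T \<Longrightarrow> i \<notin> S \<Longrightarrow> g i = 0) \<Longrightarrow> sum g S = sum g T"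
  by (rule sum.mono_neutral_left) auto

lemma Hp_HpS:
  assumes "finite S" "{s. \<exists>t. c s t \<noteq> (\<lambda>_. 0)} \<subseteq> S"
  shows "Hp c = HpS c S"
proof (intro ext)
  fix r k pt
  have z: "(-1) ^ (fst s + snd s) * QD s (\<lambda>r' k' pt'. if r' = (0,0) then c s k' pt' else 0) r k pt = 0"
    if "s \<in> S" "s \<notin> {s. \<exists>t. c s t \<noteq> (\<lambda>_. 0)}" for s
  proof -
    have e: "(\<lambda>r' k' pt'. if r' = (0,0) then c s k' pt' else 0) = (\<lambda>r k pt. 0)"
      using that by (auto simp: fun_eq_iff)
    show ?thesis unfolding e QD_zero by simp
  qed
  show "Hp c r k pt = HpS c S r k pt"
    unfolding Hp_def HpS_def
    using sum_superset[OF assms, of "\<lambda>s. (-1) ^ (fst s + snd s) * QD s (\<lambda>r' k' pt'. if r' = (0,0) then c s k' pt' else 0) r k pt"] z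
    by simp
qed

lemma qagree_HpS:
  assumes "finite S" "\<And>s t. agree (c s t) (c0 s t)"
  shows "qagree (HpS c S) (HpS c0 S)"
  unfolding qagree_def HpS_def
proof (intro allI agree_cmult agree_sum[OF assms(1)])
  fix r k s
  have "qagree (\<lambda>r' k' pt'. if r' = (0,0) then c s k' pt' else 0) (\<lambda>r' k' pt'. if r' = (0,0) then c0 s k' pt' else 0)"
    unfolding qagree_def using assms(2) by (intro allI agree_if) auto
  then have "qagree (QD s (\<lambda>r' k' pt'. if r' = (0,0) then c s k' pt' else 0)) (QD s (\<lambda>r' k' pt'. if r' = (0,0) then c0 s k' pt' else 0))"
    by (rule qagree_QD)
  then show "agree (QD s (\<lambda>r' k' pt'. if r' = (0,0) then c s k' pt' else 0) r k)
          (QD s (\<lambda>r' k' pt'. if r' = (0,0) then c0 s k' pt' else 0) r k)"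
    unfolding qagree_def by blast
qed

lemma adm_finite:
  assumes "admissible H c"
  shows "finite {s. \<exists>t. c s t \<noteq> (\<lambda>_. 0)}"
proof -
  have "{s. \<exists>t. c s t \<noteq> (\<lambda>_. 0)} = fst ` {(s,t). c s t \<noteq> (\<lambda>_. 0)}" by force
  then show ?thesis using assms unfolding admissible_def by simp
qed

lemma adm_smooth: "admissible H c \<Longrightarrow> smooth_jet (c s t)"
  unfolding admissible_def by blast

lemma adm_sum:
  assumes "admissible H c" "{s. \<exists>t. c s t \<noteq> (\<lambda>_. 0)} \<subseteq> bx N"
  shows "lapL H k pt - adjL H (lapL pL) k pt = (\<Sum>s\<in>bx N. c s k pt * Fl s pt)"
proof -
  have "lapL H k pt - adjL H (lapL pL) k pt = (\<Sum>s\<in>{s. c s k \<noteq> (\<lambda>_. 0)}. c s k pt * Dm s Flap pt)"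
    using assms(1) unfolding admissible_def by blast
  also have "\<dots> = (\<Sum>s\<in>{s. c s k \<noteq> (\<lambda>_. 0)}. c s k pt * Fl s pt)" by (simp add: Dm_Flap)
  also have "\<dots> = (\<Sum>s\<in>bx N. c s k pt * Fl s pt)"
  proof -
    have sub: "{s. c s k \<noteq> (\<lambda>_. 0)} \<subseteq> bx N" using assms(2) by blast
    show ?thesis by (rule sum.mono_neutral_left[OF finite_bx sub]) auto
  qed
  finally show ?thesis .
qed

lemma adm_agree:
  assumes c: "admissible H c" and c0: "admissible H c0"
  shows "agree (c s t) (c0 s t)"
proof -
  obtain N where N: "{s. \<exists>t. c s t \<noteq> (\<lambda>_. 0)} \<union> {s. \<exists>t. c0 s t \<noteq> (\<lambda>_. 0)} \<subseteq> bx N"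
  proof -
    have "finite ({s. \<exists>t. c s t \<noteq> (\<lambda>_. 0)} \<union> {s. \<exists>t. c0 s t \<noteq> (\<lambda>_. 0)})"
      using adm_finite[OF c] adm_finite[OF c0] by simp
    then show ?thesis using that finite_in_box by blast
  qed
  let ?d = "\<lambda>s pt. c s t pt - c0 s t pt"
  have syz: "syz ?d N"
    unfolding syz_def
  proof (intro conjI allI impI)
    fix s show "smooth_jet (?d s)" using adm_smooth[OF c] adm_smooth[OF c0] by (intro smooth_diff)
  next
    fix s assume "s \<notin> bx N"
    then have "c s t = (\<lambda>_. 0)" "c0 s t = (\<lambda>_. 0)" using N by blast+
    then show "?d s = (\<lambda>_. 0)" by simp
  next
    fix pt
    have "(\<Sum>s\<in>bx N. ?d s pt * Fl s pt) = (\<Sum>s\<in>bx N. c s t pt * Fl s pt) - (\<Sum>s\<in>bx N. c0 s t pt * Fl s pt)"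
      by (simp add: left_diff_distrib sum_subtractf)
    also have "\<dots> = 0"
      using adm_sum[OF c, of N t pt] adm_sum[OF c0, of N t pt] N by simp
    finally show "(\<Sum>s\<in>bx N. ?d s pt * Fl s pt) = 0" .
  qed
  have sc: "smooth_jet (c s t)" "smooth_jet (c0 s t)" using adm_smooth c c0 by auto
  have "DW w (c s t) pt = DW w (c0 s t) pt" if "onE pt" for w pt
  proof -
    have "c s t = (\<lambda>pt. c0 s t pt + ?d s pt)" by simp
    then have "DW w (c s t) = (\<lambda>pt. DW w (c0 s t) pt + DW w (?d s) pt)"
      using DW_add[OF sc(2) smooth_diff[OF sc]] by simp
    then show ?thesis using syz_DW[OF syz that] by simp
  qed
  then show ?thesis unfolding agree_def using sc by blast
qed

lemma adm_qagree:
  assumes c: "admissible H c" and c0: "admissible H c0"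
  shows "qagree (Hp c) (Hp c0)"
proof -
  let ?S = "{s. \<exists>t. c s t \<noteq> (\<lambda>_. 0)} \<union> {s. \<exists>t. c0 s t \<noteq> (\<lambda>_. 0)}"
  have fS: "finite ?S" using adm_finite[OF c] adm_finite[OF c0] by simp
  have "Hp c = HpS c ?S" "Hp c0 = HpS c0 ?S" by (rule Hp_HpS[OF fS]; blast)+
  then show ?thesis using qagree_HpS[OF fS adm_agree[OF c c0]] by simp
qed

lemma evq_cong:
  assumes c: "admissible H c" and c0: "admissible H c0" and E: "onE pt"
  shows "evq H c H' r k pt = evq H c0 H' r k pt"
proof -
  have "QD s (Hp c) r k pt = QD s (Hp c0) r k pt" for s
    using qagree_QD[OF adm_qagree[OF c c0], of s] agree_onE[OF _ E] unfolding qagree_def by blast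
  then show ?thesis unfolding evq_def by simp
qed

lemma zeroT_Q_cong:
  assumes "\<And>r k pt. onE pt \<Longrightarrow> q r k pt = q' r k pt"
  shows "zeroT_Q q = zeroT_Q q'"
proof -
  have "Qred q ab cd pt = Qred q' ab cd pt" if "onE pt" for ab cd pt
    unfolding Qred_def using assms[OF that] by simp
  then show ?thesis unfolding zeroT_Q_def zeroE_def by simp
qed

lemma schouten_cong:
  assumes "admissible H c" "admissible H c0" "admissible H' c'" "admissible H' c0'"
  shows "zeroT_Q (schouten H c H' c') = zeroT_Q (schouten H c0 H' c0')"
  by (rule zeroT_Q_cong) (simp add: schouten_def evq_cong[OF assms(1,2)] evq_cong[OF assms(3,4)])

section \<open>Symbolic polynomials\<close>

datatype pe = PC int | PV jvar | PA pe pe | PM pe pe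

fun ev :: "pe \<Rightarrow> jfun" where
  "ev (PC c) = (\<lambda>pt. of_int c)"
| "ev (PV v) = (\<lambda>pt. pt v)"
| "ev (PA a b) = (\<lambda>pt. ev a pt + ev b pt)"
| "ev (PM a b) = (\<lambda>pt. ev a pt * ev b pt)"

lemma smooth_ev: "smooth_jet (ev e)"
  by (induction e) (auto intro: smooth_const smooth_coord smooth_add smooth_mult)

fun pa :: "pe \<Rightarrow> pe \<Rightarrow> pe" where
  "pa (PC x) (PC y) = PC (x + y)"
| "pa (PC x) b = (if x = 0 then b else PA (PC x) b)"
| "pa a (PC y) = (if y = 0 then a else PA a (PC y))"
| "pa a b = PA a b"

fun pm :: "pe \<Rightarrow> pe \<Rightarrow> pe" where
  "pm (PC x) (PC y) = PC (x * y)"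
| "pm (PC x) b = (if x = 0 then PC 0 else if x = 1 then b else PM (PC x) b)"
| "pm a (PC y) = (if y = 0 then PC 0 else if y = 1 then a else PM a (PC y))"
| "pm a b = PM a b"

lemma ev_pa: "ev (pa a b) = (\<lambda>pt. ev a pt + ev b pt)"
  by (induction a b rule: pa.induct) auto

lemma ev_pm: "ev (pm a b) = (\<lambda>pt. ev a pt * ev b pt)"
  by (induction a b rule: pm.induct) auto

fun sdg :: "jvar \<Rightarrow> (nat \<times> nat \<Rightarrow> nat \<times> nat) \<Rightarrow> pe \<Rightarrow> pe" where
  "sdg w sh (PC c) = PC 0"
| "sdg w sh (PV v) = (case v of JU s \<Rightarrow> (if w = v then PA (PC 1) (PV (JU (sh s))) else PV (JU (sh s)))
                        | _ \<Rightarrow> PC (if w = v then 1 else 0))"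
| "sdg w sh (PA a b) = pa (sdg w sh a) (sdg w sh b)"
| "sdg w sh (PM a b) = pa (pm (sdg w sh a) b) (pm a (sdg w sh b))"

lemma Dg_ev: "Dg w sh (ev e) = ev (sdg w sh e)"
proof (induction e)
  case (PC x)
  then show ?case by (simp add: Dg_const)
next
  case (PV v)
  then show ?case by (cases v) (auto simp: Dg_coord fun_eq_iff)
next
  case (PA e1 e2)
  then show ?case by (simp add: Dg_add smooth_ev ev_pa)
next
  case (PM e1 e2)
  then show ?case by (simp add: Dg_mult smooth_ev ev_pa ev_pm)
qed

abbreviation sdx :: "pe \<Rightarrow> pe" where "sdx \<equiv> sdg JX (\<lambda>s. (fst s + 1, snd s))"
abbreviation sdy :: "pe \<Rightarrow> pe" where "sdy \<equiv> sdg JY (\<lambda>s. (fst s, snd s + 1))"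

lemma DX_ev: "DX (ev e) = ev (sdx e)"
  by (simp add: DX_Dg Dg_ev)
lemma DY_ev: "DY (ev e) = ev (sdy e)"
  by (simp add: DY_Dg Dg_ev)

fun spd :: "jvar \<Rightarrow> pe \<Rightarrow> pe" where
  "spd v (PC c) = PC 0"
| "spd v (PV w) = PC (if v = w then 1 else 0)"
| "spd v (PA a b) = pa (spd v a) (spd v b)"
| "spd v (PM a b) = pa (pm (spd v a) b) (pm a (spd v b))"

lemma pd_ev: "pd v (ev e) = ev (spd v e)"
proof (induction e)
  case (PC x)
  then show ?case by (simp add: pd_const)
next
  case (PV w)
  then show ?case by (simp add: pd_coord)
next
  case (PA e1 e2)
  then show ?case by (simp add: pd_add smooth_good smooth_ev ev_pa)
next
  case (PM e1 e2)
  then show ?case by (simp add: pd_mult smooth_good smooth_ev ev_pa ev_pm)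
qed

fun pvars :: "pe \<Rightarrow> jvar list" where
  "pvars (PC c) = []"
| "pvars (PV v) = [v]"
| "pvars (PA a b) = pvars a @ pvars b"
| "pvars (PM a b) = pvars a @ pvars b"

lemma ev_dep: "(\<forall>v\<in>set (pvars e). pt v = pt' v) \<Longrightarrow> ev e pt = ev e pt'"
  by (induction e) auto

lemma pd_ev_zero: "v \<notin> set (pvars e) \<Longrightarrow> pd v (ev e) = (\<lambda>_. 0)"
  by (rule pd_indep[of "set (pvars e)"]) (auto intro: ev_dep)

fun jus :: "jvar list \<Rightarrow> (nat \<times> nat) list" where
  "jus [] = []"
| "jus (JU s # vs) = s # jus vs"
| "jus (_ # vs) = jus vs"

lemma jus_set: "JU s \<in> set vs \<longleftrightarrow> s \<in> set (jus vs)"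
  by (induction vs rule: jus.induct) auto

type_synonym al = "((nat \<times> nat) \<times> pe) list"

fun evA :: "al \<Rightarrow> lin" where
  "evA [] = (\<lambda>s pt. 0)"
| "evA ((t, e) # xs) = (\<lambda>s pt. (if t = s then ev e pt else 0) + evA xs s pt)"

lemma mkL_evA: "mkL (map (\<lambda>(t, e). (t, ev e)) xs) = evA xs"
  by (induction xs) (auto simp: mkL_def fun_eq_iff)

lemma smooth_if_ev: "smooth_jet (\<lambda>pt. if C then ev e pt else 0)"
  by (cases C) (simp_all add: smooth_ev smooth_const)

lemma smooth_evA: "smooth_jet (evA xs s)"
  by (induction xs) (auto intro!: smooth_add smooth_const smooth_if_ev)

lemma evA_append: "evA (xs @ ys) = (\<lambda>s pt. evA xs s pt + evA ys s pt)"
  by (induction xs) (auto simp: fun_eq_iff)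

lemma evA_notin: "s \<notin> fst ` set xs \<Longrightarrow> evA xs s = (\<lambda>_. 0)"
  by (induction xs) (auto simp: fun_eq_iff)

fun aget :: "al \<Rightarrow> nat \<times> nat \<Rightarrow> pe" where
  "aget [] s = PC 0"
| "aget ((t, e) # xs) s = (if t = s then pa e (aget xs s) else aget xs s)"

lemma ev_aget: "ev (aget xs s) = evA xs s"
  by (induction xs) (auto simp: ev_pa fun_eq_iff)

definition aLDX :: "al \<Rightarrow> al" where
  "aLDX xs = map (\<lambda>(t, e). (t, sdx e)) xs @ map (\<lambda>(t, e). ((fst t + 1, snd t), e)) xs"

definition aLDY :: "al \<Rightarrow> al" where
  "aLDY xs = map (\<lambda>(t, e). (t, sdy e)) xs @ map (\<lambda>(t, e). ((fst t, snd t + 1), e)) xs"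

lemma DX_if: "DX (\<lambda>pt. if C then ev e pt else 0) = (\<lambda>pt. if C then ev (sdx e) pt else 0)"
  by (cases C) (simp_all add: DX_ev DX_zero)
lemma DY_if: "DY (\<lambda>pt. if C then ev e pt else 0) = (\<lambda>pt. if C then ev (sdy e) pt else 0)"
  by (cases C) (simp_all add: DY_ev DY_zero)

lemma DX_evA: "DX (evA xs s) = evA (map (\<lambda>(t, e). (t, sdx e)) xs) s"
  by (induction xs) (auto simp: DX_zero DX_add smooth_if_ev smooth_evA DX_if)
lemma DY_evA: "DY (evA xs s) = evA (map (\<lambda>(t, e). (t, sdy e)) xs) s"
  by (induction xs) (auto simp: DY_zero DY_add smooth_if_ev smooth_evA DY_if)

lemma shX_evA: "(if 0 < fst s then evA xs (fst s - 1, snd s) pt else 0)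
   = evA (map (\<lambda>(t, e). ((fst t + 1, snd t), e)) xs) s pt"
proof (induction xs)
  case Nil
  then show ?case by simp
next
  case (Cons te xs)
  obtain t e where te: "te = (t, e)" by (cases te)
  have "(if 0 < fst s then (if t = (fst s - 1, snd s) then ev e pt else 0) else 0)
      = (if (fst t + 1, snd t) = s then ev e pt else 0)"
    by (cases s; cases t) auto
  then show ?case using Cons te by (auto split: if_splits)
qed

lemma shY_evA: "(if 0 < snd s then evA xs (fst s, snd s - 1) pt else 0)
   = evA (map (\<lambda>(t, e). ((fst t, snd t + 1), e)) xs) s pt"
proof (induction xs)
  case Nil
  then show ?case by simp
next
  case (Cons te xs)
  obtain t e where te: "te = (t, e)" by (cases te)
  have "(if 0 < snd s then (if t = (fst s, snd s - 1) then ev e pt else 0) else 0)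
      = (if (fst t, snd t + 1) = s then ev e pt else 0)"
    by (cases s; cases t) auto
  then show ?case using Cons te by (auto split: if_splits)
qed

lemma LDX_evA: "LDX (evA xs) = evA (aLDX xs)"
  by (simp add: LDX_def aLDX_def evA_append DX_evA shX_evA fun_eq_iff)

lemma LDY_evA: "LDY (evA xs) = evA (aLDY xs)"
  by (simp add: LDY_def aLDY_def evA_append DY_evA shY_evA fun_eq_iff)

definition aLD :: "nat \<times> nat \<Rightarrow> al \<Rightarrow> al" where
  "aLD s xs = (aLDX ^^ fst s) ((aLDY ^^ snd s) xs)"

lemma LDX_pow_evA: "(LDX ^^ n) (evA xs) = evA ((aLDX ^^ n) xs)"
  by (induction n) (auto simp: LDX_evA)
lemma LDY_pow_evA: "(LDY ^^ n) (evA xs) = evA ((aLDY ^^ n) xs)"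
  by (induction n) (auto simp: LDY_evA)

lemma LD_evA: "LD s (evA xs) = evA (aLD s xs)"
  by (simp add: LD_def aLD_def LDX_pow_evA LDY_pow_evA)

lemma LDX_zero: "LDX (\<lambda>s pt. 0) = (\<lambda>s pt. 0)"
  by (simp add: LDX_def DX_zero fun_eq_iff)
lemma LDY_zero: "LDY (\<lambda>s pt. 0) = (\<lambda>s pt. 0)"
  by (simp add: LDY_def DY_zero fun_eq_iff)
lemma LD_zero: "LD s (\<lambda>k pt. 0) = (\<lambda>k pt. 0)"
  by (simp add: LD_def pow_zero LDX_zero LDY_zero)

definition lapA :: "al \<Rightarrow> al" where
  "lapA xs = aLDX (aLDX xs) @ aLDY (aLDY xs)"

lemma lapL_evA: "lapL (evA xs) = evA (lapA xs)"
  by (simp add: lapL_def lapA_def LDX_evA LDY_evA evA_append)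

definition pLl :: al where "pLl = [((0,0), PC 1)]"

lemma pL_evA: "pL = evA pLl"
  by (auto simp: pL_def pLl_def fun_eq_iff)

definition aMul :: "pe \<Rightarrow> al \<Rightarrow> al" where
  "aMul e xs = map (\<lambda>(t, f). (t, pm e f)) xs"

lemma evA_aMul: "evA (aMul e xs) = (\<lambda>k pt. ev e pt * evA xs k pt)"
  by (induction xs) (auto simp: aMul_def ev_pm fun_eq_iff algebra_simps)

lemma evA_concat: "evA (concat xss) = (\<lambda>s pt. \<Sum>xs\<leftarrow>xss. evA xs s pt)"
  by (induction xss) (auto simp: evA_append fun_eq_iff)

definition adjA :: "al \<Rightarrow> al \<Rightarrow> al" where
  "adjA H P = concat (map (\<lambda>s. aMul (PC ((-1) ^ (fst s + snd s))) (aLD s (aMul (aget H s) P)))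
                (remdups (map fst H)))"

lemma adjL_evA: "adjL (evA H) (evA P) = evA (adjA H P)"
proof (intro ext)
  fix r pt
  let ?g = "\<lambda>s. (-1) ^ (fst s + snd s) * LD s (\<lambda>k pt'. evA H s pt' * evA P k pt') r pt"
  have sub: "{s. evA H s \<noteq> (\<lambda>_. 0)} \<subseteq> set (remdups (map fst H))"
    using evA_notin by fastforce
  have "adjL (evA H) (evA P) r pt = (\<Sum>s\<in>{s. evA H s \<noteq> (\<lambda>_. 0)}. ?g s)"
    unfolding adjL_def by simp
  also have "\<dots> = (\<Sum>s\<in>set (remdups (map fst H)). ?g s)"
    by (rule sum_superset[OF finite_set sub]) (simp add: LD_zero)
  also have "\<dots> = (\<Sum>s\<leftarrow>remdups (map fst H). ?g s)"
    by (rule sum.distinct_set_conv_list) simp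
  also have "\<dots> = evA (adjA H P) r pt"
  proof -
    have "?g s = evA (aMul (PC ((-1) ^ (fst s + snd s))) (aLD s (aMul (aget H s) P))) r pt" for s
    proof -
      have e: "(\<lambda>k pt'. evA H s pt' * evA P k pt') = evA (aMul (aget H s) P)"
        by (simp add: evA_aMul ev_aget)
      show ?thesis unfolding e LD_evA by (simp add: evA_aMul)
    qed
    then show ?thesis unfolding adjA_def evA_concat by (simp add: o_def)
  qed
  finally show "adjL (evA H) (evA P) r pt = evA (adjA H P) r pt" .
qed


section \<open>Normal forms\<close>

fun enc :: "jvar \<Rightarrow> nat" where
  "enc JX = 0"
| "enc JY = 1"
| "enc (JU s) = 2 + 64 * fst s + snd s"

definition evM :: "jvar list \<Rightarrow> jfun" where
  "evM m = (\<lambda>pt. prod_list (map pt m))"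

lemma evM_Nil: "evM [] pt = 1" by (simp add: evM_def)
lemma evM_Cons: "evM (a # m) pt = pt a * evM m pt" by (simp add: evM_def)

definition mmul :: "jvar list \<Rightarrow> jvar list \<Rightarrow> jvar list" where
  "mmul m m' = foldr (insort_key enc) m m'"

lemma evM_insort: "evM (insort_key f x m) pt = pt x * evM m pt"
  unfolding evM_def by (induction m) (auto simp: algebra_simps)

lemma evM_mmul: "evM (mmul m m') pt = evM m pt * evM m' pt"
  unfolding mmul_def by (induction m) (simp_all add: evM_insort evM_Cons evM_Nil)

type_synonym poly = "(jvar list \<times> int) list"

definition evP :: "poly \<Rightarrow> jfun" where
  "evP p = (\<lambda>pt. \<Sum>(m, c)\<leftarrow>p. of_int c * evM m pt)"

fun addt :: "jvar list \<times> int \<Rightarrow> poly \<Rightarrow> poly" where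
  "addt t [] = (if snd t = 0 then [] else [t])"
| "addt t (u # p) = (if fst t = fst u then (if snd t + snd u = 0 then p else (fst t, snd t + snd u) # p)
                     else u # addt t p)"

lemma evP_Cons: "evP ((m, c) # p) pt = of_int c * evM m pt + evP p pt"
  by (simp add: evP_def)
lemma evP_Nil: "evP [] pt = 0"
  by (simp add: evP_def)
lemma evP_Cons': "evP (t # p) pt = of_int (snd t) * evM (fst t) pt + evP p pt"
  by (cases t) (simp add: evP_def)

lemma evP_addt: "evP (addt t p) pt = of_int (snd t) * evM (fst t) pt + evP p pt"
proof (induction p)
  case Nil
  obtain m c where "t = (m, c)" by (cases t)
  then show ?case by (simp add: evP_Cons evP_Nil)
next
  case (Cons u p)
  obtain m c where t: "t = (m, c)" by (cases t)
  obtain m1 c1 where u: "u = (m1, c1)" by (cases u)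
  show ?case
  proof (cases "m = m1")
    case True
    then show ?thesis
    proof (cases "c + c1 = 0")
      case True
      have "of_int c * evM m pt + of_int c1 * evM m pt = (of_int (c + c1) :: real) * evM m pt"
        by (simp add: algebra_simps)
      then have "of_int c * evM m pt + of_int c1 * evM m pt = (0::real)" using True by simp
      then show ?thesis using \<open>m = m1\<close> True t u by (simp add: evP_Cons)
    next
      case False
      then show ?thesis using \<open>m = m1\<close> t u by (simp add: evP_Cons algebra_simps)
    qed
  next
    case False
    then show ?thesis using Cons t u by (simp add: evP_Cons algebra_simps)
  qed
qed

definition padd :: "poly \<Rightarrow> poly \<Rightarrow> poly" where
  "padd p q = foldr addt p q"

lemma evP_padd: "evP (padd p q) pt = evP p pt + evP q pt"
  unfolding padd_def by (induction p) (simp_all add: evP_addt evP_Nil evP_Cons')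

definition pmul :: "poly \<Rightarrow> poly \<Rightarrow> poly" where
  "pmul p q = foldr (\<lambda>(m, c) acc. padd (map (\<lambda>(m', c'). (mmul m m', c * c')) q) acc) p []"

lemma evP_scale: "evP (map (\<lambda>(m', c'). (mmul m m', c * c')) q) pt = of_int c * evM m pt * evP q pt"
  by (induction q) (auto simp: evP_Nil evP_Cons' evM_mmul algebra_simps split: prod.splits)

lemma evP_pmul: "evP (pmul p q) pt = evP p pt * evP q pt"
  unfolding pmul_def by (induction p) (auto simp: evP_padd evP_scale algebra_simps evP_Nil evP_Cons' split: prod.splits)

fun nf :: "pe \<Rightarrow> poly" where
  "nf (PC c) = (if c = 0 then [] else [([], c)])"
| "nf (PV v) = [([v], 1)]"
| "nf (PA a b) = padd (nf a) (nf b)"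
| "nf (PM a b) = pmul (nf a) (nf b)"

lemma evP_nf: "evP (nf e) pt = ev e pt"
  by (induction e) (auto simp: evP_padd evP_pmul evP_Nil evP_Cons' evM_def)

fun redE :: "pe \<Rightarrow> pe" where
  "redE (PC c) = PC c"
| "redE (PV v) = (case v of JU s \<Rightarrow> if 2 \<le> snd s then
       PM (PC ((-1) ^ (snd s div 2))) (PV (JU (fst s + 2 * (snd s div 2), snd s mod 2))) else PV v
     | _ \<Rightarrow> PV v)"
| "redE (PA a b) = PA (redE a) (redE b)"
| "redE (PM a b) = PM (redE a) (redE b)"

lemma onE_step: "onE pt \<Longrightarrow> pt (JU (a, b + 2)) = - pt (JU (a + 2, b))"
  unfolding onE_def by (simp add: eq_neg_iff_add_eq_0)

lemma onE_red_gen: "onE pt \<Longrightarrow> pt (JU (a, 2 * k + r)) = (-1) ^ k * pt (JU (a + 2 * k, r))"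
proof (induction k arbitrary: a)
  case 0
  then show ?case by simp
next
  case (Suc k)
  have "pt (JU (a, 2 * Suc k + r)) = - pt (JU (a + 2, 2 * k + r))"
    using onE_step[OF Suc.prems, of a "2 * k + r"] by (simp add: algebra_simps)
  also have "\<dots> = - ((-1) ^ k * pt (JU (a + 2 + 2 * k, r)))" using Suc by simp
  finally show ?case by (simp add: algebra_simps)
qed

lemma ev_redE: "onE pt \<Longrightarrow> ev (redE e) pt = ev e pt"
proof (induction e)
  case (PV v)
  then show ?case
  proof (cases v)
    case (JU s)
    obtain a b where s: "s = (a, b)" by (cases s)
    show ?thesis
    proof (cases "2 \<le> b")
      case True
      have e: "(-1) ^ (b div 2) * pt (JU (a + 2 * (b div 2), b mod 2)) = pt (JU (a, b))"
        using onE_red_gen[OF PV, of a "b div 2" "b mod 2"] by simp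
      have "ev (redE (PV v)) pt = (-1) ^ (b div 2) * pt (JU (a + 2 * (b div 2), b mod 2))"
        using JU s True by simp
      then show ?thesis using e JU s by simp
    next
      case False
      then show ?thesis using JU s by simp
    qed
  qed auto
qed auto

lemma zeroE_nf: "nf (redE e) = [] \<Longrightarrow> zeroE (ev e)"
proof -
  assume a: "nf (redE e) = []"
  have "ev (redE e) pt = 0" for pt using evP_nf[of "redE e" pt] a by (simp add: evP_Nil)
  then show ?thesis unfolding zeroE_def using ev_redE by metis
qed

type_synonym cl = "((nat \<times> nat) \<times> (nat \<times> nat) \<times> pe) list"

fun evC :: "cl \<Rightarrow> nat \<times> nat \<Rightarrow> nat \<times> nat \<Rightarrow> jfun" where
  "evC [] = (\<lambda>s t pt. 0)"
| "evC ((a, b, e) # xs) = (\<lambda>s t pt. (if a = s \<and> b = t then ev e pt else 0) + evC xs s t pt)"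

fun cget :: "cl \<Rightarrow> nat \<times> nat \<Rightarrow> nat \<times> nat \<Rightarrow> pe" where
  "cget [] s t = PC 0"
| "cget ((a, b, e) # xs) s t = (if a = s \<and> b = t then pa e (cget xs s t) else cget xs s t)"

lemma ev_cget: "ev (cget xs s t) = evC xs s t"
  by (induction xs rule: evC.induct) (auto simp: ev_pa fun_eq_iff)

lemma smooth_evC: "smooth_jet (evC xs s t)"
  using smooth_ev[of "cget xs s t"] by (simp add: ev_cget)

lemma evC_notin: "(s, t) \<notin> (\<lambda>(a, b, e). (a, b)) ` set xs \<Longrightarrow> evC xs s t = (\<lambda>_. 0)"
  by (induction xs rule: evC.induct) (auto simp: fun_eq_iff)

lemma evC_notin1: "s \<notin> fst ` set xs \<Longrightarrow> evC xs s t = (\<lambda>_. 0)"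
  by (rule evC_notin) force

lemma evC_notin2: "t \<notin> (\<lambda>(a, b, e). b) ` set xs \<Longrightarrow> evC xs s t = (\<lambda>_. 0)"
  by (rule evC_notin) force

lemma sub_helper: "(\<And>s. s \<notin> A \<Longrightarrow> f s = z) \<Longrightarrow> {s. f s \<noteq> z} \<subseteq> A"
  by auto

definition flp :: "nat \<times> nat \<Rightarrow> pe" where
  "flp s = PA (PV (JU (fst s + 2, snd s))) (PV (JU (fst s, snd s + 2)))"

lemma ev_flp: "ev (flp s) = Fl s"
  by (simp add: flp_def Fl_def)

lemma ev_foldr_pa: "ev (foldr (\<lambda>s acc. pa (f s) acc) L (PC 0)) pt = (\<Sum>s\<leftarrow>L. ev (f s) pt)"
  by (induction L) (auto simp: ev_pa)

definition admR :: "cl \<Rightarrow> nat \<times> nat \<Rightarrow> pe" where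
  "admR cl k = foldr (\<lambda>s acc. pa (pm (cget cl s k) (flp s)) acc) (remdups (map fst cl)) (PC 0)"

definition chkAdm :: "al \<Rightarrow> cl \<Rightarrow> bool" where
  "chkAdm H cl = list_all (\<lambda>k. nf (PA (aget (lapA H) k) (PA (PM (PC (-1)) (aget (adjA H (lapA pLl)) k))
          (PM (PC (-1)) (admR cl k)))) = [])
       (remdups (map fst (lapA H) @ map fst (adjA H (lapA pLl)) @ map (\<lambda>(a, b, e). b) cl))"

lemma nf_zero: "nf e = [] \<Longrightarrow> ev e pt = 0"
  using evP_nf[of e pt] by (simp add: evP_Nil)

lemma adm_sum_evC:
  "(\<Sum>s\<in>{s. evC cl s k \<noteq> (\<lambda>_. 0)}. evC cl s k pt * Dm s Flap pt) = ev (admR cl k) pt"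
proof -
  have sub: "{s. evC cl s k \<noteq> (\<lambda>_. 0)} \<subseteq> set (remdups (map fst cl))"
    by (rule sub_helper) (simp add: evC_notin1)
  have "(\<Sum>s\<in>{s. evC cl s k \<noteq> (\<lambda>_. 0)}. evC cl s k pt * Dm s Flap pt)
      = (\<Sum>s\<in>set (remdups (map fst cl)). evC cl s k pt * Dm s Flap pt)"
    by (rule sum_superset[OF finite_set sub]) auto
  also have "\<dots> = (\<Sum>s\<leftarrow>remdups (map fst cl). evC cl s k pt * Dm s Flap pt)"
    by (rule sum.distinct_set_conv_list) simp
  also have "\<dots> = ev (admR cl k) pt"
    unfolding admR_def ev_foldr_pa by (simp add: ev_pm ev_cget ev_flp Dm_Flap)
  finally show ?thesis .
qed

lemma adm_evC:
  assumes "chkAdm H cl"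
  shows "admissible (evA H) (evC cl)"
  unfolding admissible_def
proof (intro conjI allI)
  have "{(s, t). evC cl s t \<noteq> (\<lambda>_. 0)} \<subseteq> (\<lambda>(a, b, e). (a, b)) ` set cl"
    using evC_notin by blast
  then show "finite {(s, t). evC cl s t \<noteq> (\<lambda>_. 0)}" by (rule finite_subset) simp
next
  fix s t show "smooth_jet (evC cl s t)" by (rule smooth_evC)
next
  fix k pt
  let ?L = "lapA H" and ?A = "adjA H (lapA pLl)"
  have lhs: "lapL (evA H) k pt - adjL (evA H) (lapL pL) k pt = evA ?L k pt - evA ?A k pt"
    by (simp add: lapL_evA pL_evA adjL_evA)
  show "lapL (evA H) k pt - adjL (evA H) (lapL pL) k pt =
        (\<Sum>s\<in>{s. evC cl s k \<noteq> (\<lambda>_. 0)}. evC cl s k pt * Dm s Flap pt)"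
    unfolding lhs adm_sum_evC
  proof (cases "k \<in> set (remdups (map fst ?L @ map fst ?A @ map (\<lambda>(a, b, e). b) cl))")
    case True
    then have "nf (PA (aget ?L k) (PA (PM (PC (-1)) (aget ?A k)) (PM (PC (-1)) (admR cl k)))) = []"
      using assms unfolding chkAdm_def list_all_iff by blast
    from nf_zero[OF this, of pt] show "evA ?L k pt - evA ?A k pt = ev (admR cl k) pt"
      by (simp add: ev_aget)
  next
    case False
    then have "k \<notin> fst ` set ?L" "k \<notin> fst ` set ?A" "k \<notin> (\<lambda>(a, b, e). b) ` set cl" by auto
    moreover have "ev (admR cl k) pt = 0" if "k \<notin> (\<lambda>(a, b, e). b) ` set cl"
      using adm_sum_evC[of cl k pt] evC_notin2[OF that] by simp
    ultimately show "evA ?L k pt - evA ?A k pt = ev (admR cl k) pt"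
      by (simp add: evA_notin)
  qed
qed

definition lredA :: "al \<Rightarrow> nat \<times> nat \<Rightarrow> pe" where
  "lredA xs ab = foldr (\<lambda>k acc. pa (pm (PC ((-1) ^ k)) (aget xs (fst ab - 2 * k, snd ab + 2 * k))) acc)
      [0..<fst ab div 2 + 1] (PC 0)"

lemma ev_lredA: "ev (lredA xs ab) = Lred (evA xs) ab"
proof
  fix pt
  have "ev (lredA xs ab) pt = (\<Sum>k\<leftarrow>[0..<fst ab div 2 + 1]. (-1) ^ k * evA xs (fst ab - 2 * k, snd ab + 2 * k) pt)"
    unfolding lredA_def ev_foldr_pa by (simp add: ev_pm ev_aget)
  also have "\<dots> = (\<Sum>k\<in>set [0..<fst ab div 2 + 1]. (-1) ^ k * evA xs (fst ab - 2 * k, snd ab + 2 * k) pt)"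
    by (rule sum.distinct_set_conv_list[symmetric]) simp
  also have "set [0..<fst ab div 2 + 1] = {..fst ab div 2}" by auto
  finally show "ev (lredA xs ab) pt = Lred (evA xs) ab pt" unfolding Lred_def by simp
qed

definition rix :: "nat \<times> nat \<Rightarrow> nat \<times> nat" where
  "rix t = (fst t + 2 * (snd t div 2), snd t mod 2)"

definition chkL :: "al \<Rightarrow> bool" where
  "chkL xs = list_all (\<lambda>ab. nf (redE (lredA xs ab)) = []) (remdups (map (\<lambda>t. rix (fst t)) xs))"

lemma chkL_zeroT:
  assumes "chkL xs"
  shows "zeroT_L (evA xs)"
  unfolding zeroT_L_def
proof (intro allI impI)
  fix ab :: "nat \<times> nat" assume b1: "snd ab \<le> 1"
  show "zeroE (Lred (evA xs) ab)"
  proof (cases "ab \<in> set (remdups (map (\<lambda>t. rix (fst t)) xs))")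
    case True
    then have "nf (redE (lredA xs ab)) = []" using assms unfolding chkL_def list_all_iff by blast
    then show ?thesis using zeroE_nf ev_lredA by metis
  next
    case False
    have "evA xs (fst ab - 2 * k, snd ab + 2 * k) = (\<lambda>_. 0)" if "k \<le> fst ab div 2" for k
    proof (rule evA_notin)
      show "(fst ab - 2 * k, snd ab + 2 * k) \<notin> fst ` set xs"
      proof
        assume "(fst ab - 2 * k, snd ab + 2 * k) \<in> fst ` set xs"
        moreover have "rix (fst ab - 2 * k, snd ab + 2 * k) = ab"
          using b1 that unfolding rix_def by (cases ab) auto
        ultimately show False using False by force
      qed
    qed
    then show ?thesis unfolding zeroE_def Lred_def by simp
  qed
qed

type_synonym pq = "nat \<times> nat \<Rightarrow> nat \<times> nat \<Rightarrow> pe"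

definition evQ :: "pq \<Rightarrow> quad" where
  "evQ q = (\<lambda>r k. ev (q r k))"

definition sQDX :: "pq \<Rightarrow> pq" where
  "sQDX q r k = pa (pa (sdx (q r k)) (if 0 < fst r then q (fst r - 1, snd r) k else PC 0))
      (if 0 < fst k then q r (fst k - 1, snd k) else PC 0)"

definition sQDY :: "pq \<Rightarrow> pq" where
  "sQDY q r k = pa (pa (sdy (q r k)) (if 0 < snd r then q (fst r, snd r - 1) k else PC 0))
      (if 0 < snd k then q r (fst k, snd k - 1) else PC 0)"

lemma ev_if0: "ev (if C then a else PC 0) pt = (if C then ev a pt else 0)"
  by simp

lemma QDX_evQ: "QDX (evQ q) = evQ (sQDX q)"
  by (simp add: QDX_def evQ_def sQDX_def DX_ev ev_pa fun_eq_iff)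

lemma QDY_evQ: "QDY (evQ q) = evQ (sQDY q)"
  by (simp add: QDY_def evQ_def sQDY_def DY_ev ev_pa fun_eq_iff)

definition sQD :: "nat \<times> nat \<Rightarrow> pq \<Rightarrow> pq" where
  "sQD s q = (sQDX ^^ fst s) ((sQDY ^^ snd s) q)"

lemma QDX_pow_evQ: "(QDX ^^ n) (evQ q) = evQ ((sQDX ^^ n) q)"
  by (induction n) (auto simp: QDX_evQ)
lemma QDY_pow_evQ: "(QDY ^^ n) (evQ q) = evQ ((sQDY ^^ n) q)"
  by (induction n) (auto simp: QDY_evQ)

lemma QD_evQ: "QD s (evQ q) = evQ (sQD s q)"
  by (simp add: QD_def sQD_def QDX_pow_evQ QDY_pow_evQ)

definition qsm :: "quad \<Rightarrow> bool" where
  "qsm q \<longleftrightarrow> (\<forall>r k. smooth_jet (q r k))"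

lemma smooth_if0: "smooth_jet f \<Longrightarrow> smooth_jet (\<lambda>pt. if C then f pt else 0)"
  by (cases C) (simp_all add: smooth_const)

lemma qsm_QDX: "qsm q \<Longrightarrow> qsm (QDX q)"
  unfolding qsm_def QDX_def by (auto intro!: smooth_add smooth_DX smooth_if0)
lemma qsm_QDY: "qsm q \<Longrightarrow> qsm (QDY q)"
  unfolding qsm_def QDY_def by (auto intro!: smooth_add smooth_DY smooth_if0)

lemma QDX_scale: "qsm q \<Longrightarrow> QDX (\<lambda>r k pt. a * q r k pt) = (\<lambda>r k pt. a * QDX q r k pt)"
  unfolding qsm_def QDX_def by (simp add: DX_Dg Dg_cmult fun_eq_iff algebra_simps)
lemma QDY_scale: "qsm q \<Longrightarrow> QDY (\<lambda>r k pt. a * q r k pt) = (\<lambda>r k pt. a * QDY q r k pt)"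
  unfolding qsm_def QDY_def by (simp add: DY_Dg Dg_cmult fun_eq_iff algebra_simps)

lemma QDX_pow_scale: "qsm q \<Longrightarrow> (QDX ^^ n) (\<lambda>r k pt. a * q r k pt) = (\<lambda>r k pt. a * (QDX ^^ n) q r k pt) \<and> qsm ((QDX ^^ n) q)"
  by (induction n) (auto simp: QDX_scale qsm_QDX)
lemma QDY_pow_scale: "qsm q \<Longrightarrow> (QDY ^^ n) (\<lambda>r k pt. a * q r k pt) = (\<lambda>r k pt. a * (QDY ^^ n) q r k pt) \<and> qsm ((QDY ^^ n) q)"
  by (induction n) (auto simp: QDY_scale qsm_QDY)

lemma QD_scale: "qsm q \<Longrightarrow> QD s (\<lambda>r k pt. a * q r k pt) = (\<lambda>r k pt. a * QD s q r k pt)"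
  unfolding QD_def using QDY_pow_scale QDX_pow_scale by metis

lemma qsm_evQ: "qsm (evQ q)"
  by (simp add: qsm_def evQ_def smooth_ev)

definition sbase :: "cl \<Rightarrow> nat \<times> nat \<Rightarrow> pq" where
  "sbase cl s r' k' = (if r' = (0,0) then cget cl s k' else PC 0)"

definition hpq :: "cl \<Rightarrow> pq" where
  "hpq cl r k = foldr (\<lambda>s acc. pa (pm (PC ((-1) ^ (fst s + snd s))) (sQD s (sbase cl s) r k)) acc)
      (remdups (map fst cl)) (PC 0)"

lemma Hp_evC: "Hp (evC cl) = (\<lambda>r k pt. - (1/2) * evQ (hpq cl) r k pt)"
proof -
  let ?S = "set (remdups (map fst cl))"
  have sub: "{s. \<exists>t. evC cl s t \<noteq> (\<lambda>_. 0)} \<subseteq> ?S"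
    using evC_notin1[of _ cl] by auto
  have base: "(\<lambda>r' k' pt'. if r' = (0,0) then evC cl s k' pt' else 0) = evQ (sbase cl s)" for s
    by (auto simp: evQ_def sbase_def ev_cget fun_eq_iff)
  have "Hp (evC cl) = HpS (evC cl) ?S" by (rule Hp_HpS[OF finite_set sub])
  also have "\<dots> = (\<lambda>r k pt. - (1/2) * evQ (hpq cl) r k pt)"
  proof (intro ext)
    fix r k pt
    have "(\<Sum>s\<in>?S. (-1) ^ (fst s + snd s) * QD s (\<lambda>r' k' pt'. if r' = (0,0) then evC cl s k' pt' else 0) r k pt)
        = (\<Sum>s\<leftarrow>remdups (map fst cl). (-1) ^ (fst s + snd s) * QD s (\<lambda>r' k' pt'. if r' = (0,0) then evC cl s k' pt' else 0) r k pt)"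
      by (rule sum.distinct_set_conv_list) simp
    also have "\<dots> = evQ (hpq cl) r k pt"
      unfolding base QD_evQ by (simp add: evQ_def hpq_def ev_foldr_pa ev_pm)
    finally show "HpS (evC cl) ?S r k pt = - (1/2) * evQ (hpq cl) r k pt"
      unfolding HpS_def by simp
  qed
  finally show ?thesis .
qed

lemma QD_Hp_evC: "QD s (Hp (evC cl)) = (\<lambda>r k pt. - (1/2) * ev (sQD s (hpq cl) r k) pt)"
  unfolding Hp_evC QD_scale[OF qsm_evQ] QD_evQ by (simp add: evQ_def)

definition evqA :: "cl \<Rightarrow> al \<Rightarrow> pq" where
  "evqA cl H' r k = foldr (\<lambda>s acc. pa (pm (aget H' s) (sQD s (hpq cl) r k)) acc) (remdups (map fst H')) (PC 0)"

definition evqB :: "al \<Rightarrow> al \<Rightarrow> pq" where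
  "evqB H H' r k = foldr (\<lambda>s acc. pa (pm (aget (aLD s H) r) (spd (JU s) (aget H' k))) acc)
      (remdups (jus (pvars (aget H' k)))) (PC 0)"

lemma sum_list_neg_half: "(\<Sum>x\<leftarrow>L. - (f x / 2)) = - ((\<Sum>x\<leftarrow>L. f x) / (2::real))"
  by (induction L) (auto simp: field_simps)

lemma evq_sym:
  "evq (evA H) (evC cl) (evA H') r k pt = - (1/2) * ev (evqA cl H' r k) pt + ev (evqB H H' r k) pt"
proof -
  have sub1: "{s. evA H' s \<noteq> (\<lambda>_. 0)} \<subseteq> set (remdups (map fst H'))"
    by (rule sub_helper) (simp add: evA_notin)
  have "(\<Sum>s\<in>{s. evA H' s \<noteq> (\<lambda>_. 0)}. evA H' s pt * QD s (Hp (evC cl)) r k pt)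
      = (\<Sum>s\<in>set (remdups (map fst H')). evA H' s pt * QD s (Hp (evC cl)) r k pt)"
    by (rule sum_superset[OF finite_set sub1]) auto
  also have "\<dots> = (\<Sum>s\<leftarrow>remdups (map fst H'). evA H' s pt * QD s (Hp (evC cl)) r k pt)"
    by (rule sum.distinct_set_conv_list) simp
  also have "\<dots> = - (1/2) * ev (evqA cl H' r k) pt"
    unfolding evqA_def ev_foldr_pa QD_Hp_evC
    by (simp add: ev_pm ev_aget sum_list_neg_half)
  finally have A: "(\<Sum>s\<in>{s. evA H' s \<noteq> (\<lambda>_. 0)}. evA H' s pt * QD s (Hp (evC cl)) r k pt)
      = - (1/2) * ev (evqA cl H' r k) pt" .
  have e: "evA H' k = ev (aget H' k)" by (simp add: ev_aget)
  have sub2: "{s. pd (JU s) (evA H' k) \<noteq> (\<lambda>_. 0)} \<subseteq> set (remdups (jus (pvars (aget H' k))))"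
    unfolding e by (rule sub_helper) (simp add: pd_ev_zero jus_set)
  have "(\<Sum>s\<in>{s. pd (JU s) (evA H' k) \<noteq> (\<lambda>_. 0)}. LD s (evA H) r pt * pd (JU s) (evA H' k) pt)
      = (\<Sum>s\<in>set (remdups (jus (pvars (aget H' k)))). LD s (evA H) r pt * pd (JU s) (evA H' k) pt)"
    by (rule sum_superset[OF finite_set sub2]) auto
  also have "\<dots> = (\<Sum>s\<leftarrow>remdups (jus (pvars (aget H' k))). LD s (evA H) r pt * pd (JU s) (evA H' k) pt)"
    by (rule sum.distinct_set_conv_list) simp
  also have "\<dots> = ev (evqB H H' r k) pt"
  proof -
    have pdk: "pd (JU s) (evA H' k) = ev (spd (JU s) (aget H' k))" for s by (simp only: e pd_ev)
    show ?thesis unfolding evqB_def ev_foldr_pa by (simp add: ev_pm ev_aget LD_evA pdk)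
  qed
  finally have B: "(\<Sum>s\<in>{s. pd (JU s) (evA H' k) \<noteq> (\<lambda>_. 0)}. LD s (evA H) r pt * pd (JU s) (evA H' k) pt)
      = ev (evqB H H' r k) pt" .
  show ?thesis unfolding evq_def A B by simp
qed

fun evi :: "pe \<Rightarrow> (jvar \<Rightarrow> int) \<Rightarrow> int" where
  "evi (PC c) p = c"
| "evi (PV v) p = p v"
| "evi (PA a b) p = evi a p + evi b p"
| "evi (PM a b) p = evi a p * evi b p"

lemma ev_evi: "ev e (\<lambda>v. of_int (p v)) = of_int (evi e p)"
  by (induction e) auto

definition ent :: "al \<Rightarrow> cl \<Rightarrow> al \<Rightarrow> cl \<Rightarrow> pq" where
  "ent H c H' c' r k = PA (PA (PM (PC (-1)) (evqA c H' r k)) (PM (PC 2) (evqB H H' r k)))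
                          (PA (PM (PC (-1)) (evqA c' H r k)) (PM (PC 2) (evqB H' H r k)))"

lemma ev_ent: "ev (ent H c H' c' r k) pt = 2 * schouten (evA H) (evC c) (evA H') (evC c') r k pt"
  unfolding ent_def schouten_def evq_sym by (simp add: algebra_simps)

definition bigE :: "al \<Rightarrow> cl \<Rightarrow> al \<Rightarrow> cl \<Rightarrow> pe" where
  "bigE H c H' c' = PA (PA (ent H c H' c' (1,1) (2,1)) (PM (PC (-1)) (ent H c H' c' (1,1) (0,3))))
      (PA (PM (PC (-1)) (ent H c H' c' (2,1) (1,1))) (ent H c H' c' (0,3) (1,1)))"

definition p0 :: "jvar \<Rightarrow> int" where
  "p0 v = (if v = JX \<or> v = JU (1,0) \<or> v = JU (0,1) then 1 else 0)"

lemma onE_p0: "onE (\<lambda>v. of_int (p0 v))"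
  unfolding onE_def p0_def by simp

lemma nonzero_crit:
  assumes "evi (bigE H c H' c') p0 \<noteq> 0"
  shows "\<not> zeroT_Q (schouten (evA H) (evC c) (evA H') (evC c'))"
proof
  let ?q = "schouten (evA H) (evC c) (evA H') (evC c')"
  let ?pt = "\<lambda>v. real_of_int (p0 v)"
  assume "zeroT_Q ?q"
  then have "zeroE (\<lambda>pt. Qred ?q (1,1) (2,1) pt - Qred ?q (2,1) (1,1) pt)"
    unfolding zeroT_Q_def by simp
  then have z: "Qred ?q (1,1) (2,1) ?pt - Qred ?q (2,1) (1,1) ?pt = 0"
    using onE_p0 unfolding zeroE_def by blast
  have q1: "Qred ?q (1,1) (2,1) ?pt = ?q (1,1) (2,1) ?pt - ?q (1,1) (0,3) ?pt"
    unfolding Qred_def by (simp add: numeral_eq_Suc)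
  have q2: "Qred ?q (2,1) (1,1) ?pt = ?q (2,1) (1,1) ?pt - ?q (0,3) (1,1) ?pt"
    unfolding Qred_def by (simp add: numeral_eq_Suc)
  have "ev (bigE H c H' c') ?pt = 2 * (Qred ?q (1,1) (2,1) ?pt - Qred ?q (2,1) (1,1) ?pt)"
    unfolding bigE_def q1 q2 by (simp add: ev_ent algebra_simps)
  then have "ev (bigE H c H' c') ?pt = 0" using z by simp
  then show False using assms ev_evi[of "bigE H c H' c'" p0] by simp
qed

section \<open>Bivectors without u-dependence\<close>

lemma pd_JU_evA:
  assumes "\<forall>(t, e)\<in>set H. jus (pvars e) = []"
  shows "pd (JU s) (evA H k) = (\<lambda>_. 0)"
proof -
  have "JU s \<notin> set (pvars (aget H k))"
  proof -
    have "\<forall>v\<in>set (pvars (aget H k)). \<forall>s. v \<noteq> JU s"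
      using assms
    proof (induction H)
      case Nil
      then show ?case by simp
    next
      case (Cons te H)
      obtain t e where te: "te = (t, e)" by (cases te)
      have j: "\<forall>v\<in>set (pvars e). \<forall>s. v \<noteq> JU s"
        using Cons.prems te jus_set by fastforce
      have "set (pvars (pa a b)) \<subseteq> set (pvars a) \<union> set (pvars b)" for a b
        by (induction a b rule: pa.induct) auto
      then show ?case using Cons te j by (auto split: if_splits) blast+
    qed
    then show ?thesis by blast
  qed
  then show ?thesis using pd_ev_zero ev_aget by metis
qed

lemma schouten_const_zero:
  assumes "\<forall>(t, e)\<in>set H. jus (pvars e) = []"
  shows "zeroT_Q (schouten (evA H) (evC []) (evA H) (evC []))"
proof -
  have hp: "Hp (evC []) = (\<lambda>r k pt. 0)"
    unfolding Hp_def by simp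
  have "evq (evA H) (evC []) (evA H) r k pt = 0" for r k pt
    unfolding evq_def hp QD_zero using pd_JU_evA[OF assms] by simp
  then show ?thesis
    unfolding zeroT_Q_def zeroE_def Qred_def schouten_def by simp
qed


definition chkA :: "al \<Rightarrow> al \<Rightarrow> bool" where
  "chkA xs ys = list_all (\<lambda>k. nf (redE (PA (aget xs k) (PM (PC (-1)) (aget ys k)))) = [])
      (remdups (map fst (xs @ ys)))"

lemma chkA_zeroE:
  assumes "chkA xs ys"
  shows "\<forall>k. zeroE (\<lambda>pt. evA xs k pt - evA ys k pt)"
proof
  fix k show "zeroE (\<lambda>pt. evA xs k pt - evA ys k pt)"
  proof (cases "k \<in> fst ` set (xs @ ys)")
    case True
    then have "nf (redE (PA (aget xs k) (PM (PC (-1)) (aget ys k)))) = []"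
      using assms unfolding chkA_def list_all_iff by auto
    then have "zeroE (ev (PA (aget xs k) (PM (PC (-1)) (aget ys k))))" using zeroE_nf by blast
    then show ?thesis by (simp add: ev_aget)
  next
    case False
    then have "k \<notin> fst ` set xs" "k \<notin> fst ` set ys" by auto
    then show ?thesis by (simp add: evA_notin zeroE_def)
  qed
qed

definition B0l :: al where "B0l = [((0,0), PC 1)]"
definition B1l :: al where "B1l = [((0,2), PC 1)]"
definition B2l :: al where "B2l = [((1,1), PC 1)]"
definition B3l :: al where "B3l = [((0,1), PC 1), ((1,1), PM (PC 2) (PV JX)), ((0,2), PM (PC 2) (PV JY))]"
definition B4l :: al where "B4l = [((1,0), PC 1), ((1,1), PM (PC 2) (PV JY)), ((0,2), PM (PC (-2)) (PV JX))]"
definition B5l :: al where "B5l = [((0,1), PV (JU (0,2))), ((1,0), PM (PC (-1)) (PV (JU (1,1)))),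
   ((0,2), PM (PC 2) (PV (JU (0,1)))), ((1,1), PM (PC (-2)) (PV (JU (1,0))))]"
definition B6l :: al where "B6l = [((1,0), PV (JU (0,2))), ((0,1), PV (JU (1,1))),
   ((1,1), PM (PC 2) (PV (JU (0,1)))), ((0,2), PM (PC 2) (PV (JU (1,0))))]"
definition B7l :: al where "B7l = [
   ((1,0), PA (PA (PV (JU (0,1))) (PM (PV JX) (PV (JU (1,1))))) (PM (PV JY) (PV (JU (0,2))))),
   ((0,1), PA (PA (PV (JU (1,0))) (PM (PV JY) (PV (JU (1,1))))) (PM (PC (-1)) (PM (PV JX) (PV (JU (0,2)))))),
   ((0,2), PM (PC 2) (PA (PM (PV JY) (PV (JU (1,0)))) (PM (PC (-1)) (PM (PV JX) (PV (JU (0,1))))))),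
   ((1,1), PM (PC 2) (PA (PM (PV JX) (PV (JU (1,0)))) (PM (PV JY) (PV (JU (0,1))))))]"
definition B8l :: al where "B8l = [
   ((1,0), PM (PC (-1)) (PA (PA (PV (JU (1,0))) (PM (PV JY) (PV (JU (1,1))))) (PM (PC (-1)) (PM (PV JX) (PV (JU (0,2))))))),
   ((0,1), PA (PA (PV (JU (0,1))) (PM (PV JX) (PV (JU (1,1))))) (PM (PV JY) (PV (JU (0,2))))),
   ((0,2), PM (PC 2) (PA (PM (PV JX) (PV (JU (1,0)))) (PM (PV JY) (PV (JU (0,1)))))),
   ((1,1), PM (PC (-2)) (PA (PM (PV JY) (PV (JU (1,0)))) (PM (PC (-1)) (PM (PV JX) (PV (JU (0,1)))))))]"

definition c5l :: cl where "c5l = [((0,2), (0,1), (PC (1))), ((1,0), (1,1), (PC (-2))), ((0,0), (2,1), (PC (-2))), ((1,1), (1,0), (PC (-1))), ((0,1), (2,0), (PC (-1))), ((0,1), (0,2), (PC (3))), ((0,0), (0,3), (PC (2)))]"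
definition c6l :: cl where "c6l = [((0,2), (1,0), (PC (1))), ((1,1), (0,1), (PC (1))), ((0,1), (1,1), (PC (4))), ((1,0), (0,2), (PC (2))), ((0,0), (1,2), (PC (4)))]"
definition c7l :: cl where "c7l = [((1,1), (1,0), (PM (PC (1)) (PV JX))), ((0,2), (1,0), (PM (PC (1)) (PV JY))), ((0,1), (1,0), (PC (3))), ((0,1), (2,0), (PM (PC (1)) (PV JX))), ((1,1), (0,1), (PM (PC (1)) (PV JY))), ((0,2), (0,1), (PM (PC (-1)) (PV JX))), ((1,0), (0,1), (PC (1))), ((0,1), (1,1), (PM (PC (4)) (PV JY))), ((1,0), (1,1), (PM (PC (2)) (PV JX))), ((0,0), (1,1), (PC (6))), ((0,0), (2,1), (PM (PC (2)) (PV JX))), ((0,1), (0,2), (PM (PC (-3)) (PV JX))), ((1,0), (0,2), (PM (PC (2)) (PV JY))), ((0,0), (1,2), (PM (PC (4)) (PV JY))), ((0,0), (0,3), (PM (PC (-2)) (PV JX)))]"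
definition c8l :: cl where "c8l = [((1,1), (1,0), (PM (PC (-1)) (PV JY))), ((0,2), (1,0), (PM (PC (1)) (PV JX))), ((1,0), (1,0), (PC (-1))), ((0,0), (2,0), (PC (-1))), ((0,1), (2,0), (PM (PC (-1)) (PV JY))), ((1,1), (0,1), (PM (PC (1)) (PV JX))), ((0,2), (0,1), (PM (PC (1)) (PV JY))), ((0,1), (0,1), (PC (3))), ((0,1), (1,1), (PM (PC (4)) (PV JX))), ((1,0), (1,1), (PM (PC (-2)) (PV JY))), ((0,0), (2,1), (PM (PC (-2)) (PV JY))), ((0,1), (0,2), (PM (PC (3)) (PV JY))), ((1,0), (0,2), (PM (PC (2)) (PV JX))), ((0,0), (0,2), (PC (5))), ((0,0), (1,2), (PM (PC (4)) (PV JX))), ((0,0), (0,3), (PM (PC (2)) (PV JY)))]"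

lemma B0_evA: "B0 = evA B0l" unfolding B0_def B0l_def mkL_evA[symmetric] by (simp add: fun_eq_iff)
lemma B1_evA: "B1 = evA B1l" unfolding B1_def B1l_def mkL_evA[symmetric] by (simp add: fun_eq_iff)
lemma B2_evA: "B2 = evA B2l" unfolding B2_def B2l_def mkL_evA[symmetric] by (simp add: fun_eq_iff)
lemma B3_evA: "B3 = evA B3l" unfolding B3_def B3l_def mkL_evA[symmetric] by (simp add: fun_eq_iff)
lemma B4_evA: "B4 = evA B4l" unfolding B4_def B4l_def mkL_evA[symmetric] by (simp add: fun_eq_iff)
lemma B5_evA: "B5 = evA B5l" unfolding B5_def B5l_def mkL_evA[symmetric] by (simp add: fun_eq_iff)
lemma B6_evA: "B6 = evA B6l" unfolding B6_def B6l_def mkL_evA[symmetric] by (simp add: fun_eq_iff)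
lemma B7_evA: "B7 = evA B7l" unfolding B7_def B7l_def mkL_evA[symmetric] by (simp add: fun_eq_iff algebra_simps)
lemma B8_evA: "B8 = evA B8l" unfolding B8_def B8l_def mkL_evA[symmetric] by (simp add: fun_eq_iff algebra_simps)


lemma var_biv_evA:
  assumes "chkL (lapA Hl)" "chkA (adjA Hl (lapA pLl)) (lapA Hl)"
  shows "var_bivector (evA Hl)"
  unfolding var_bivector_def
proof (intro conjI allI)
  have "{s. evA Hl s \<noteq> (\<lambda>_. 0)} \<subseteq> fst ` set Hl"
    by (rule sub_helper) (simp add: evA_notin)
  then show "finite {s. evA Hl s \<noteq> (\<lambda>_. 0)}" by (rule finite_subset) simp
next
  fix s show "smooth_jet (evA Hl s)" by (rule smooth_evA)
next
  show "zeroT_L (lapL (evA Hl))" unfolding lapL_evA by (rule chkL_zeroT[OF assms(1)])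
next
  fix k
  show "zeroE (\<lambda>pt. adjL (evA Hl) (lapL pL) k pt - lapL (evA Hl) k pt)"
    unfolding lapL_evA pL_evA adjL_evA using chkA_zeroE[OF assms(2)] by blast
qed

lemma poisson_evA:
  assumes "chkL (lapA Hl)" "chkA (adjA Hl (lapA pLl)) (lapA Hl)" "chkAdm Hl []"
    "\<forall>(t, e)\<in>set Hl. jus (pvars e) = []"
  shows "poisson (evA Hl)"
  unfolding poisson_def schouten_zero_def
proof (intro conjI allI impI)
  show "var_bivector (evA Hl)" by (rule var_biv_evA[OF assms(1,2)])
  show "\<exists>c. admissible (evA Hl) c" "\<exists>c. admissible (evA Hl) c" using adm_evC[OF assms(3)] by blast+
  fix c c' assume a: "admissible (evA Hl) c" "admissible (evA Hl) c'"
  show "zeroT_Q (schouten (evA Hl) c (evA Hl) c')"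
    unfolding schouten_cong[OF a(1) adm_evC[OF assms(3)] a(2) adm_evC[OF assms(3)]]
    by (rule schouten_const_zero[OF assms(4)])
qed

lemma nonzero_evA:
  assumes "chkAdm Hl cl" "chkAdm H'l cl'" "evi (bigE Hl cl H'l cl') p0 \<noteq> 0"
  shows "schouten_nonzero (evA Hl) (evA H'l)"
  unfolding schouten_nonzero_def
proof (intro conjI allI impI)
  show "\<exists>c. admissible (evA Hl) c" using adm_evC[OF assms(1)] by blast
  show "\<exists>c. admissible (evA H'l) c" using adm_evC[OF assms(2)] by blast
  fix c c' assume a: "admissible (evA Hl) c" "admissible (evA H'l) c'"
  show "\<not> zeroT_Q (schouten (evA Hl) c (evA H'l) c')"
    unfolding schouten_cong[OF a(1) adm_evC[OF assms(1)] a(2) adm_evC[OF assms(2)]]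
    by (rule nonzero_crit[OF assms(3)])
qed

lemma not_poisson_evA:
  assumes "chkAdm Hl cl" "schouten_nonzero (evA Hl) (evA Hl)"
  shows "\<not> poisson (evA Hl)"
proof
  assume "poisson (evA Hl)"
  then have "zeroT_Q (schouten (evA Hl) (evC cl) (evA Hl) (evC cl))"
    unfolding poisson_def schouten_zero_def using adm_evC[OF assms(1)] by blast
  moreover have "\<not> zeroT_Q (schouten (evA Hl) (evC cl) (evA Hl) (evC cl))"
    using assms(2) adm_evC[OF assms(1)] unfolding schouten_nonzero_def by blast
  ultimately show False by simp
qed

lemma L0: "chkL (lapA B0l)" by code_simp
lemma L1: "chkL (lapA B1l)" by code_simp
lemma L2: "chkL (lapA B2l)" by code_simp
lemma L3: "chkL (lapA B3l)" by code_simp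
lemma L4: "chkL (lapA B4l)" by code_simp
lemma L5: "chkL (lapA B5l)" by code_simp
lemma L6: "chkL (lapA B6l)" by code_simp
lemma L7: "chkL (lapA B7l)" by code_simp
lemma L8: "chkL (lapA B8l)" by code_simp
lemma A0: "chkA (adjA B0l (lapA pLl)) (lapA B0l)" by code_simp
lemma A1: "chkA (adjA B1l (lapA pLl)) (lapA B1l)" by code_simp
lemma A2: "chkA (adjA B2l (lapA pLl)) (lapA B2l)" by code_simp
lemma A3: "chkA (adjA B3l (lapA pLl)) (lapA B3l)" by code_simp
lemma A4: "chkA (adjA B4l (lapA pLl)) (lapA B4l)" by code_simp
lemma A5: "chkA (adjA B5l (lapA pLl)) (lapA B5l)" by code_simp
lemma A6: "chkA (adjA B6l (lapA pLl)) (lapA B6l)" by code_simp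
lemma A7: "chkA (adjA B7l (lapA pLl)) (lapA B7l)" by code_simp
lemma A8: "chkA (adjA B8l (lapA pLl)) (lapA B8l)" by code_simp
lemma M0: "chkAdm B0l []" by code_simp
lemma M1: "chkAdm B1l []" by code_simp
lemma M2: "chkAdm B2l []" by code_simp
lemma M3: "chkAdm B3l []" by code_simp
lemma M4: "chkAdm B4l []" by code_simp
lemma M5: "chkAdm B5l c5l" by code_simp
lemma M6: "chkAdm B6l c6l" by code_simp
lemma M7: "chkAdm B7l c7l" by code_simp
lemma M8: "chkAdm B8l c8l" by code_simp
lemma J0: "\<forall>(t, e)\<in>set B0l. jus (pvars e) = []" by code_simp
lemma J1: "\<forall>(t, e)\<in>set B1l. jus (pvars e) = []" by code_simp
lemma J2: "\<forall>(t, e)\<in>set B2l. jus (pvars e) = []" by code_simp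
lemma J3: "\<forall>(t, e)\<in>set B3l. jus (pvars e) = []" by code_simp
lemma J4: "\<forall>(t, e)\<in>set B4l. jus (pvars e) = []" by code_simp
lemma N55: "evi (bigE B5l c5l B5l c5l) p0 \<noteq> 0" by code_simp
lemma N56: "evi (bigE B5l c5l B6l c6l) p0 \<noteq> 0" by code_simp
lemma N57: "evi (bigE B5l c5l B7l c7l) p0 \<noteq> 0" by code_simp
lemma N58: "evi (bigE B5l c5l B8l c8l) p0 \<noteq> 0" by code_simp
lemma N66: "evi (bigE B6l c6l B6l c6l) p0 \<noteq> 0" by code_simp
lemma N67: "evi (bigE B6l c6l B7l c7l) p0 \<noteq> 0" by code_simp
lemma N68: "evi (bigE B6l c6l B8l c8l) p0 \<noteq> 0" by code_simp
lemma N77: "evi (bigE B7l c7l B7l c7l) p0 \<noteq> 0" by code_simp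
lemma N78: "evi (bigE B7l c7l B8l c8l) p0 \<noteq> 0" by code_simp
lemma N88: "evi (bigE B8l c8l B8l c8l) p0 \<noteq> 0" by code_simp

lemma P0: "poisson B0" unfolding B0_evA by (rule poisson_evA[OF L0 A0 M0 J0])
lemma P1: "poisson B1" unfolding B1_evA by (rule poisson_evA[OF L1 A1 M1 J1])
lemma P2: "poisson B2" unfolding B2_evA by (rule poisson_evA[OF L2 A2 M2 J2])
lemma P3: "poisson B3" unfolding B3_evA by (rule poisson_evA[OF L3 A3 M3 J3])
lemma P4: "poisson B4" unfolding B4_evA by (rule poisson_evA[OF L4 A4 M4 J4])

lemma V5: "var_bivector B5" unfolding B5_evA by (rule var_biv_evA[OF L5 A5])
lemma V6: "var_bivector B6" unfolding B6_evA by (rule var_biv_evA[OF L6 A6])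
lemma V7: "var_bivector B7" unfolding B7_evA by (rule var_biv_evA[OF L7 A7])
lemma V8: "var_bivector B8" unfolding B8_evA by (rule var_biv_evA[OF L8 A8])

lemma S55: "schouten_nonzero B5 B5" unfolding B5_evA by (rule nonzero_evA[OF M5 M5 N55])
lemma S56: "schouten_nonzero B5 B6" unfolding B5_evA B6_evA by (rule nonzero_evA[OF M5 M6 N56])
lemma S57: "schouten_nonzero B5 B7" unfolding B5_evA B7_evA by (rule nonzero_evA[OF M5 M7 N57])
lemma S58: "schouten_nonzero B5 B8" unfolding B5_evA B8_evA by (rule nonzero_evA[OF M5 M8 N58])
lemma S66: "schouten_nonzero B6 B6" unfolding B6_evA by (rule nonzero_evA[OF M6 M6 N66])
lemma S67: "schouten_nonzero B6 B7" unfolding B6_evA B7_evA by (rule nonzero_evA[OF M6 M7 N67])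
lemma S68: "schouten_nonzero B6 B8" unfolding B6_evA B8_evA by (rule nonzero_evA[OF M6 M8 N68])
lemma S77: "schouten_nonzero B7 B7" unfolding B7_evA by (rule nonzero_evA[OF M7 M7 N77])
lemma S78: "schouten_nonzero B7 B8" unfolding B7_evA B8_evA by (rule nonzero_evA[OF M7 M8 N78])
lemma S88: "schouten_nonzero B8 B8" unfolding B8_evA by (rule nonzero_evA[OF M8 M8 N88])

lemma NP5: "\<not> poisson B5" using S55 unfolding B5_evA by (rule not_poisson_evA[OF M5])
lemma NP6: "\<not> poisson B6" using S66 unfolding B6_evA by (rule not_poisson_evA[OF M6])
lemma NP7: "\<not> poisson B7" using S77 unfolding B7_evA by (rule not_poisson_evA[OF M7])
lemma NP8: "\<not> poisson B8" using S88 unfolding B8_evA by (rule not_poisson_evA[OF M8])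

theorem mainTheorem4:
  shows "(\<forall>i\<le>4. poisson (B i))
       \<and> (\<forall>i\<in>{5..8}. var_bivector (B i) \<and> \<not> poisson (B i))
       \<and> (\<forall>i j. 5 \<le> i \<longrightarrow> i \<le> j \<longrightarrow> j \<le> 8 \<longrightarrow> schouten_nonzero (B i) (B j))"
proof (intro conjI allI impI ballI)
  fix i :: nat assume "i \<le> 4"
  then have "i = 0 \<or> i = 1 \<or> i = 2 \<or> i = 3 \<or> i = 4" by arith
  then show "poisson (B i)" by (auto simp: B_def P0 P1 P2 P3 P4)
next
  fix i :: nat assume "i \<in> {5..8}"
  then have "i = 5 \<or> i = 6 \<or> i = 7 \<or> i = 8" by auto
  then show "var_bivector (B i)" by (auto simp: B_def V5 V6 V7 V8)
next
  fix i :: nat assume "i \<in> {5..8}"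
  then have "i = 5 \<or> i = 6 \<or> i = 7 \<or> i = 8" by auto
  then show "\<not> poisson (B i)" by (auto simp: B_def NP5 NP6 NP7 NP8)
next
  fix i j :: nat assume "5 \<le> i" "i \<le> j" "j \<le> 8"
  then have "(i = 5 \<and> j = 5) \<or> (i = 5 \<and> j = 6) \<or> (i = 5 \<and> j = 7) \<or> (i = 5 \<and> j = 8) \<or>
             (i = 6 \<and> j = 6) \<or> (i = 6 \<and> j = 7) \<or> (i = 6 \<and> j = 8) \<or>
             (i = 7 \<and> j = 7) \<or> (i = 7 \<and> j = 8) \<or> (i = 8 \<and> j = 8)" by arith
  then show "schouten_nonzero (B i) (B j)"
    by (auto simp: B_def S55 S56 S57 S58 S66 S67 S68 S77 S78 S88)
qed

end
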